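(* Let $\{\cdot,\cdot\}$ be a non-degenerate partially decoupled hydrodynamic Poisson bracket in the variables $(\rho,u,w_1,\dots,w_{N-2})$, and let $\boldsymbol\nu=\boldsymbol\nu(\mathbf w)$ be local coordinates in which the microscopic bracket takes the form $\int\partial_xF_k\,g_{kl}\,G_l\,\mathrm dx$ with $g$ a constant symmetric invertible matrix. Then the $N-2$ functionals $$C_k[\rho,\boldsymbol\nu]=\int\rho\,\nu_k\,\mathrm dx,\qquad k=1,\dots,N-2,$$ together with $$C[\rho]=\int\rho\,\mathrm dx,\qquad C[\rho,u,\boldsymbol\nu]=\int\Big(u-\frac{\rho}{2}\boldsymbol\nu\cdot g^{-1}\boldsymbol\nu\Big)\mathrm dx,$$ are Casimir invariants of the bracket, i.e. $\{C,F\}=0$ for every functional $F$.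
   Context: Fields vanish at infinity with all derivatives. A partially decoupled hydrodynamic bracket in $(\rho,u,w_1,\dots,w_{N-2})$ is $$\{F,G\}=\int\Big(\partial_xF_uG_\rho-F_\rho\partial_xG_u+\partial_xw_k\Big(F_u\frac{G_k}{\rho}-\frac{F_k}{\rho}G_u\Big)+\partial_x\Big(\frac{F_k}{\rho}\Big)\alpha_{kl}(\mathbf w)\frac{G_l}{\rho}+\frac{F_k}{\rho}\beta_{kl}(\mathbf w,\partial_x\mathbf w)\frac{G_l}{\rho}\Big)\mathrm dx,$$ with $F_u,F_\rho,F_k=\delta F/\delta w_k$ functional derivatives, sums over $k,l=1,\dots,N-2$, $\alpha(\mathbf w)$ symmetric depending only on $\mathbf w$, $\beta$ linear in $\partial_x\mathbf w$, $\partial_x\alpha=\beta+\beta^t$. Its microscopic bracket is $\{F,G\}_{\rm m}=\int(\partial_xF_k\alpha_{kl}(\mathbf w)G_l+F_k\beta_{kl}(\mathbf w,\partial_x\mathbf w)G_l)\mathrm dx$ on functionals of $\mathbf w$. Non-degenerate means the full coefficient matrix of $\partial_x F\cdot G$ is invertible; Poisson means the Jacobi identity holds. *)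

theory Defs
  imports "HOL-Analysis.Analysis"
begin

definition smooth_fun :: "(real \<Rightarrow> real) \<Rightarrow> bool" where
  "smooth_fun f \<longleftrightarrow> (\<forall>m x. ((deriv ^^ m) f) differentiable (at x))"

definition C1_fun :: "(real \<Rightarrow> real) \<Rightarrow> bool" where
  "C1_fun f \<longleftrightarrow> (\<forall>x. f differentiable (at x)) \<and> continuous_on UNIV (deriv f)"

definition decays :: "(real \<Rightarrow> real) \<Rightarrow> bool" where
  "decays f \<longleftrightarrow> (f \<longlongrightarrow> 0) at_infinity"

text \<open>Admissible field: smooth, vanishing at infinity with all derivatives,
  and (absolutely) integrable, so that functionals like \<open>\<integral>\<rho> dx\<close> are defined.\<close>
definition field :: "(real \<Rightarrow> real) \<Rightarrow> bool" where
  "field f \<longleftrightarrow> smooth_fun f \<and> (\<forall>m. decays ((deriv ^^ m) f))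
      \<and> f absolutely_integrable_on UNIV"

definition test_fun :: "(real \<Rightarrow> real) \<Rightarrow> bool" where
  "test_fun \<phi> \<longleftrightarrow> smooth_fun \<phi> \<and> bounded {x. \<phi> x \<noteq> 0}"

definition dx_vec :: "(real \<Rightarrow> real^'n) \<Rightarrow> real \<Rightarrow> real^'n" where
  "dx_vec w x = (\<chi> k. deriv (\<lambda>y. w y $ k) x)"

text \<open>Admissible states \<open>(\<rho>,u,\<w>)\<close>: fields, \<open>\<rho>\<close> nowhere zero (the bracket divides by
  \<open>\<rho>\<close>), and \<open>\<w>\<close> taking values in the coordinate domain \<open>U\<close>.\<close>
definition admissible_state ::
  "(real^'n) set \<Rightarrow> (real \<Rightarrow> real) \<Rightarrow> (real \<Rightarrow> real) \<Rightarrow> (real \<Rightarrow> real^'n) \<Rightarrow> bool" where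
  "admissible_state U \<rho> u w \<longleftrightarrow> field \<rho> \<and> field u \<and> (\<forall>k. field (\<lambda>x. w x $ k))
      \<and> (\<forall>x. \<rho> x \<noteq> 0) \<and> (\<forall>x. w x \<in> U)"

type_synonym 'n functional = "(real \<Rightarrow> real) \<Rightarrow> (real \<Rightarrow> real) \<Rightarrow> (real \<Rightarrow> real^'n) \<Rightarrow> real"

text \<open>\<open>(F\<rho>, Fu, Fw)\<close> are the functional derivatives \<open>\<delta>F/\<delta>\<rho>, \<delta>F/\<delta>u, \<delta>F/\<delta>w_k\<close> of \<open>F\<close>
  at the state \<open>(\<rho>,u,\<w>)\<close>: continuously differentiable functions representing the
  Gateaux derivative of \<open>F\<close> in every compactly supported smooth direction.\<close>
definition has_fderivs ::
  "'n functional \<Rightarrow> (real \<Rightarrow> real) \<Rightarrow> (real \<Rightarrow> real) \<Rightarrow> (real \<Rightarrow> real^'n)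
   \<Rightarrow> (real \<Rightarrow> real) \<Rightarrow> (real \<Rightarrow> real) \<Rightarrow> (real \<Rightarrow> real^'n) \<Rightarrow> bool" where
  "has_fderivs F \<rho> u w F\<rho> Fu Fw \<longleftrightarrow>
     C1_fun F\<rho> \<and> C1_fun Fu \<and> (\<forall>k. C1_fun (\<lambda>x. Fw x $ k)) \<and>
     (\<forall>\<phi> \<psi> \<eta>. test_fun \<phi> \<and> test_fun \<psi> \<and> (\<forall>k. test_fun (\<lambda>x. \<eta> x $ k)) \<longrightarrow>
        ((\<lambda>\<epsilon>. F (\<lambda>x. \<rho> x + \<epsilon> * \<phi> x) (\<lambda>x. u x + \<epsilon> * \<psi> x) (\<lambda>x. w x + \<epsilon> *\<^sub>R \<eta> x))
          has_real_derivative
          integral UNIV (\<lambda>x. F\<rho> x * \<phi> x + Fu x * \<psi> x + Fw x \<bullet> \<eta> x)) (at 0))"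

definition pd_bracket ::
  "(real^'n \<Rightarrow> real^'n^'n) \<Rightarrow> (real^'n \<Rightarrow> real^'n \<Rightarrow> real^'n^'n)
   \<Rightarrow> (real \<Rightarrow> real) \<Rightarrow> (real \<Rightarrow> real^'n)
   \<Rightarrow> (real \<Rightarrow> real) \<Rightarrow> (real \<Rightarrow> real) \<Rightarrow> (real \<Rightarrow> real^'n)
   \<Rightarrow> (real \<Rightarrow> real) \<Rightarrow> (real \<Rightarrow> real) \<Rightarrow> (real \<Rightarrow> real^'n) \<Rightarrow> real" where
  "pd_bracket \<alpha> \<beta> \<rho> w F\<rho> Fu Fw G\<rho> Gu Gw =
     integral UNIV (\<lambda>x.
         deriv Fu x * G\<rho> x - F\<rho> x * deriv Gu x
       + (\<Sum>k\<in>UNIV. deriv (\<lambda>y. w y $ k) x * (Fu x * (Gw x $ k / \<rho> x) - (Fw x $ k / \<rho> x) * Gu x))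
       + (\<Sum>k\<in>UNIV. \<Sum>l\<in>UNIV. deriv (\<lambda>y. Fw y $ k / \<rho> y) x * (\<alpha> (w x) $ k $ l) * (Gw x $ l / \<rho> x))
       + (\<Sum>k\<in>UNIV. \<Sum>l\<in>UNIV. (Fw x $ k / \<rho> x) * (\<beta> (w x) (dx_vec w x) $ k $ l) * (Gw x $ l / \<rho> x)))"

text \<open>Structural conditions on the coefficients on the domain \<open>U\<close>:
  \<open>\<alpha>\<close> symmetric, \<open>\<beta>\<close> linear in \<open>\<partial>\<^sub>x\<w>\<close>, and \<open>\<partial>\<^sub>x\<alpha> = \<beta> + \<beta>\<^sup>t\<close> (pointwise form: the derivative
  of \<open>\<alpha>\<close> in direction \<open>v\<close> is \<open>\<beta>(\<w>,v) + \<beta>(\<w>,v)\<^sup>t\<close>).\<close>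
definition pd_coefficients ::
  "(real^'n) set \<Rightarrow> (real^'n \<Rightarrow> real^'n^'n) \<Rightarrow> (real^'n \<Rightarrow> real^'n \<Rightarrow> real^'n^'n) \<Rightarrow> bool" where
  "pd_coefficients U \<alpha> \<beta> \<longleftrightarrow>
     (\<forall>w\<in>U. transpose (\<alpha> w) = \<alpha> w) \<and> (\<forall>w\<in>U. linear (\<beta> w)) \<and>
     (\<forall>w\<in>U. (\<alpha> has_derivative (\<lambda>v. \<beta> w v + transpose (\<beta> w v))) (at w))"

text \<open>Non-degeneracy: the coefficient matrix of \<open>\<partial>\<^sub>xF\<cdot>G\<close>, i.e. in the variables \<open>(\<rho>,u,\<w>)\<close>
  the block matrix \<open>[[0,1,0],[1,0,0],[0,0,\<alpha>(\<w>)/\<rho>\<^sup>2]]\<close>, is invertible; given \<open>\<rho> \<noteq> 0\<close>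
  this means \<open>\<alpha>(\<w>)\<close> is invertible.\<close>
definition nondegenerate :: "(real^'n) set \<Rightarrow> (real^'n \<Rightarrow> real^'n^'n) \<Rightarrow> bool" where
  "nondegenerate U \<alpha> \<longleftrightarrow> (\<forall>w\<in>U. invertible (\<alpha> w))"

definition local_coordinates ::
  "(real^'n) set \<Rightarrow> (real^'n \<Rightarrow> real^'n) \<Rightarrow> (real^'n \<Rightarrow> real^'n^'n)
   \<Rightarrow> (real^'n \<Rightarrow> real^'n \<Rightarrow> real^'n^'n) \<Rightarrow> bool" where
  "local_coordinates U \<nu> J DJ \<longleftrightarrow>
     (\<forall>w\<in>U. (\<nu> has_derivative (\<lambda>v. J w *v v)) (at w)) \<and>
     (\<forall>w\<in>U. invertible (J w)) \<and>
     (\<forall>w\<in>U. (J has_derivative DJ w) (at w)) \<and>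
     continuous_on U DJ"

text \<open>In the coordinates \<open>\<nu>\<close> the microscopic bracket \<open>\<integral>(\<partial>\<^sub>xF\<^sub>k \<alpha>\<^sub>k\<^sub>l G\<^sub>l + F\<^sub>k \<beta>\<^sub>k\<^sub>l G\<^sub>l)dx\<close>
  takes the form \<open>\<integral>\<partial>\<^sub>xF\<^sub>k g\<^sub>k\<^sub>l G\<^sub>l dx\<close>. Since \<open>\<delta>F/\<delta>\<w> = J\<^sup>t \<delta>F/\<delta>\<nu>\<close>, this is the
  transformation law \<open>J \<alpha> J\<^sup>t = g\<close> and \<open>(\<partial>\<^sub>xJ) \<alpha> J\<^sup>t + J \<beta> J\<^sup>t = 0\<close>, with
  \<open>\<partial>\<^sub>xJ = DJ(\<w>)[\<partial>\<^sub>x\<w>]\<close>, written pointwise in \<open>(\<w>, \<partial>\<^sub>x\<w>) = (w, v)\<close>.\<close>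
definition flat_microscopic ::
  "(real^'n) set \<Rightarrow> (real^'n \<Rightarrow> real^'n^'n) \<Rightarrow> (real^'n \<Rightarrow> real^'n \<Rightarrow> real^'n^'n)
   \<Rightarrow> (real^'n \<Rightarrow> real^'n^'n) \<Rightarrow> (real^'n \<Rightarrow> real^'n \<Rightarrow> real^'n^'n) \<Rightarrow> real^'n^'n \<Rightarrow> bool" where
  "flat_microscopic U \<alpha> \<beta> J DJ g \<longleftrightarrow>
     (\<forall>w\<in>U. J w ** \<alpha> w ** transpose (J w) = g) \<and>
     (\<forall>w\<in>U. \<forall>v. DJ w v ** \<alpha> w ** transpose (J w) + J w ** \<beta> w v ** transpose (J w) = 0)"

text \<open>Casimir: \<open>{C,F} = 0\<close> for every functional \<open>F\<close>, at every admissible state where the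
  functional derivatives exist (those of \<open>F\<close> vanishing at infinity, as fields do).\<close>
definition is_casimir ::
  "(real^'n) set \<Rightarrow> (real^'n \<Rightarrow> real^'n^'n) \<Rightarrow> (real^'n \<Rightarrow> real^'n \<Rightarrow> real^'n^'n)
   \<Rightarrow> 'n functional \<Rightarrow> bool" where
  "is_casimir U \<alpha> \<beta> C \<longleftrightarrow>
     (\<forall>\<rho> u w. admissible_state U \<rho> u w \<longrightarrow>
       (\<forall>C\<rho> Cu Cw. has_fderivs C \<rho> u w C\<rho> Cu Cw \<longrightarrow>
         (\<forall>F F\<rho> Fu Fw. has_fderivs F \<rho> u w F\<rho> Fu Fw \<and> decays F\<rho> \<and> decays Fu
              \<and> (\<forall>k. decays (\<lambda>x. Fw x $ k)) \<longrightarrow>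
            pd_bracket \<alpha> \<beta> \<rho> w C\<rho> Cu Cw F\<rho> Fu Fw = 0)))"

definition casimir_rho :: "'n functional" where
  "casimir_rho \<rho> u w = integral UNIV \<rho>"

definition casimir_nu :: "(real^'n \<Rightarrow> real^'n) \<Rightarrow> 'n \<Rightarrow> 'n functional" where
  "casimir_nu \<nu> k \<rho> u w = integral UNIV (\<lambda>x. \<rho> x * \<nu> (w x) $ k)"

definition casimir_u :: "(real^'n \<Rightarrow> real^'n) \<Rightarrow> real^'n^'n \<Rightarrow> 'n functional" where
  "casimir_u \<nu> g \<rho> u w =
     integral UNIV (\<lambda>x. u x - \<rho> x / 2 * (\<nu> (w x) \<bullet> (matrix_inv g *v \<nu> (w x))))"

end

theory Submission
  imports Defs
begin


lemma smooth_iff: "smooth_fun f \<longleftrightarrow> (\<forall>x. f differentiable (at x)) \<and> smooth_fun (deriv f)"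
proof -
  have "(\<forall>m x. ((deriv ^^ m) f) differentiable (at x)) \<longleftrightarrow>
        (\<forall>x. ((deriv ^^ 0) f) differentiable (at x)) \<and> (\<forall>m x. ((deriv ^^ Suc m) f) differentiable (at x))"
    by (metis not0_implies_Suc)
  then show ?thesis unfolding smooth_fun_def by (simp add: funpow_Suc_right del: funpow.simps)
qed

lemma smooth_diffD: "smooth_fun f \<Longrightarrow> f differentiable (at x)"
  using smooth_iff by blast

lemma smooth_deriv: "smooth_fun f \<Longrightarrow> smooth_fun (deriv f)"
  using smooth_iff by blast

lemma smooth_DERIV: "smooth_fun f \<Longrightarrow> (f has_real_derivative deriv f x) (at x)"
  by (meson DERIV_deriv_iff_real_differentiable smooth_diffD)

lemma smooth_cont: "smooth_fun f \<Longrightarrow> continuous_on A f"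
  by (meson continuous_at_imp_continuous_on differentiable_imp_continuous_within smooth_diffD)

lemma smooth_const: "smooth_fun (\<lambda>x. c)"
proof -
  have "(deriv ^^ Suc m) (\<lambda>x. c) = (\<lambda>x. 0)" for m
    by (induction m) (auto simp: funpow_Suc_right simp del: funpow.simps)
  then have "(deriv ^^ m) (\<lambda>x. c) differentiable (at x)" for m x
    by (cases m) auto
  then show ?thesis unfolding smooth_fun_def by blast
qed

lemma funpow_deriv: "(deriv ^^ m) (deriv f) = (deriv ^^ Suc m) f"
  by (simp add: funpow_swap1)

lemma deriv_add_n:
  fixes a b :: "real \<Rightarrow> real"
  assumes "\<forall>m<n. \<forall>x. (deriv ^^ m) a differentiable (at x)"
    and "\<forall>m<n. \<forall>x. (deriv ^^ m) b differentiable (at x)"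
  shows "(deriv ^^ n) (\<lambda>x. a x + b x) = (\<lambda>x. (deriv ^^ n) a x + (deriv ^^ n) b x)"
  using assms
proof (induction n arbitrary: a b)
  case 0 then show ?case by simp
next
  case (Suc n a b)
  have "deriv (\<lambda>x. a x + b x) = (\<lambda>x. deriv a x + deriv b x)"
  proof -
    have dab: "a differentiable at x" "b differentiable at x" for x using Suc.prems by (metis funpow_0 zero_less_Suc)+
    show ?thesis
    by (intro ext DERIV_imp_deriv DERIV_add) (meson DERIV_deriv_iff_real_differentiable dab)+
  qed
  then have "(deriv ^^ Suc n) (\<lambda>x. a x + b x) = (deriv ^^ n) (\<lambda>x. deriv a x + deriv b x)"
    by (simp add: funpow_Suc_right del: funpow.simps)
  also have "\<dots> = (\<lambda>x. (deriv ^^ n) (deriv a) x + (deriv ^^ n) (deriv b) x)"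
  proof (rule Suc.IH)
    show "\<forall>m<n. \<forall>x. (deriv ^^ m) (deriv a) differentiable at x"
    proof (intro allI impI)
      fix m x assume "m < n" then show "(deriv ^^ m) (deriv a) differentiable at x"
        using Suc.prems(1)[rule_format, of "Suc m" x] by (simp add: funpow_deriv del: funpow.simps)
    qed
    show "\<forall>m<n. \<forall>x. (deriv ^^ m) (deriv b) differentiable at x"
    proof (intro allI impI)
      fix m x assume "m < n" then show "(deriv ^^ m) (deriv b) differentiable at x"
        using Suc.prems(2)[rule_format, of "Suc m" x] by (simp add: funpow_deriv del: funpow.simps)
    qed
  qed
  finally show ?case by (simp add: funpow_Suc_right del: funpow.simps)
qed

lemma smooth_add:
  assumes A: "smooth_fun a" and B: "smooth_fun b"
  shows "smooth_fun (\<lambda>x. a x + b x)"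
  unfolding smooth_fun_def
proof (intro allI)
  fix m x
  have eq: "(deriv ^^ m) (\<lambda>x. a x + b x) = (\<lambda>x. (deriv^^m) a x + (deriv^^m) b x)"
    using A B unfolding smooth_fun_def by (intro deriv_add_n) blast+
  have da: "(deriv^^m) a differentiable at x" and db: "(deriv^^m) b differentiable at x"
    using A B unfolding smooth_fun_def by blast+
  show "(deriv ^^ m) (\<lambda>x. a x + b x) differentiable at x"
    unfolding eq by (rule differentiable_add[OF da db])
qed

lemma smooth_prod_aux:
  "\<forall>f g. smooth_fun f \<longrightarrow> smooth_fun g \<longrightarrow> (\<forall>m\<le>n. \<forall>x. (deriv ^^ m) (\<lambda>x. f x * g x) differentiable (at x))"
proof (induction n)
  case 0
  then show ?case by (simp add: differentiable_mult smooth_diffD)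
next
  case (Suc n)
  show ?case
  proof (intro allI impI)
    fix f g m x assume f: "smooth_fun f" and g: "smooth_fun g" and m: "m \<le> Suc n"
    show "(deriv ^^ m) (\<lambda>x. f x * g x) differentiable (at x)"
    proof (cases m)
      case 0 then show ?thesis using f g by (simp add: differentiable_mult smooth_diffD)
    next
      case (Suc m')
      have d: "deriv (\<lambda>x. f x * g x) = (\<lambda>x. deriv f x * g x + f x * deriv g x)"
      proof (intro ext DERIV_imp_deriv)
        fix x show "((\<lambda>x. f x * g x) has_real_derivative deriv f x * g x + f x * deriv g x) (at x)"
          using DERIV_mult[OF smooth_DERIV[OF f] smooth_DERIV[OF g], of x] by (simp add: algebra_simps)
      qed
      have f': "smooth_fun (deriv f)" and g': "smooth_fun (deriv g)" using f g smooth_deriv by auto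
      have ih1: "\<forall>k\<le>n. \<forall>x. (deriv ^^ k) (\<lambda>x. deriv f x * g x) differentiable at x"
        using Suc.IH f' g by blast
      have ih2: "\<forall>k\<le>n. \<forall>x. (deriv ^^ k) (\<lambda>x. f x * deriv g x) differentiable at x"
        using Suc.IH f g' by blast
      have mn: "m' \<le> n" using m Suc by simp
      have e: "(deriv ^^ m') (\<lambda>x. deriv f x * g x + f x * deriv g x) =
         (\<lambda>x. (deriv ^^ m') (\<lambda>x. deriv f x * g x) x + (deriv ^^ m') (\<lambda>x. f x * deriv g x) x)"
        by (rule deriv_add_n) (use ih1 ih2 mn in simp_all)
      have "(deriv ^^ m) (\<lambda>x. f x * g x) = (deriv ^^ m') (\<lambda>x. deriv f x * g x + f x * deriv g x)"
        using Suc d by (simp add: funpow_Suc_right del: funpow.simps)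
      also have "\<dots> = (\<lambda>x. (deriv ^^ m') (\<lambda>x. deriv f x * g x) x + (deriv ^^ m') (\<lambda>x. f x * deriv g x) x)"
        by (rule e)
      finally show ?thesis
        using differentiable_add[OF ih1[rule_format, OF mn] ih2[rule_format, OF mn]] by simp
    qed
  qed
qed

lemma smooth_mult: "smooth_fun f \<Longrightarrow> smooth_fun g \<Longrightarrow> smooth_fun (\<lambda>x. f x * g x)"
  unfolding smooth_fun_def[of "\<lambda>x. f x * g x"] using smooth_prod_aux by blast


lemma smooth_iter: "smooth_fun f \<Longrightarrow> smooth_fun ((deriv ^^ n) f)"
  by (induction n) (auto intro: smooth_deriv)

lemma smooth_affine:
  assumes "smooth_fun f"
  shows "smooth_fun (\<lambda>x. f (a + c * x))"
proof -
  have A: "(deriv ^^ n) (\<lambda>x. f (a + c * x)) = (\<lambda>x. c ^ n * (deriv ^^ n) f (a + c * x))" for n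
  proof (induction n)
    case 0 then show ?case by simp
  next
    case (Suc n)
    have sm: "smooth_fun ((deriv ^^ n) f)" using assms by (rule smooth_iter)
    have "((\<lambda>x. c ^ n * (deriv ^^ n) f (a + c * x)) has_real_derivative
            c ^ n * (deriv ((deriv ^^ n) f) (a + c * x) * c)) (at x)" for x
    proof -
      have "((\<lambda>x. a + c * x) has_real_derivative c) (at x)" by (auto intro!: derivative_eq_intros)
      from DERIV_chain2[OF smooth_DERIV[OF sm] this]
      show ?thesis by (rule DERIV_cmult)
    qed
    then have "deriv (\<lambda>x. c ^ n * (deriv ^^ n) f (a + c * x)) = (\<lambda>x. c ^ Suc n * deriv ((deriv ^^ n) f) (a + c * x))"
      by (intro ext DERIV_imp_deriv) (simp add: algebra_simps)
    then show ?case using Suc.IH by (simp only: funpow.simps o_apply)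
  qed
  have B: "(\<lambda>x. (deriv ^^ n) f (a + c * x)) differentiable (at x)" for n x
  proof -
    have "((\<lambda>x. a + c*x) has_real_derivative c) (at x)" by (auto intro!: derivative_eq_intros)
    then have "(\<lambda>x. a + c*x) differentiable (at x)" using real_differentiable_def by blast
    moreover have "smooth_fun ((deriv ^^ n) f)" using assms by (rule smooth_iter)
    ultimately show ?thesis using differentiable_compose[where f="(deriv ^^ n) f" and g="\<lambda>x. a + c*x"] smooth_diffD by blast
  qed
  show ?thesis unfolding smooth_fun_def
  proof (intro allI)
    fix m x
    show "(deriv ^^ m) (\<lambda>x. f (a + c * x)) differentiable (at x)"
      unfolding A by (rule differentiable_mult[OF differentiable_const[of "c^m"] B[of m x]])
  qed
qed


definition flat :: "real \<Rightarrow> real" where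
  "flat x = (if x > 0 then exp (- inverse x) else 0)"

fun PP :: "nat \<Rightarrow> real poly" where
  "PP 0 = 1"
| "PP (Suc n) = [:0,0,1:] * (PP n - pderiv (PP n))"

definition GG :: "nat \<Rightarrow> real \<Rightarrow> real" where
  "GG n x = (if x > 0 then poly (PP n) (inverse x) * exp (- inverse x) else 0)"

lemma poly_div_exp_lim: fixes q :: "real poly" shows "((\<lambda>t. poly q t / exp t) \<longlongrightarrow> 0) at_top"
proof -
  have "((\<lambda>t. \<Sum>i\<le>degree q. coeff q i * (t ^ i / exp t)) \<longlongrightarrow> (\<Sum>i\<le>degree q. coeff q i * 0)) at_top"
    by (intro tendsto_sum tendsto_mult tendsto_const tendsto_power_div_exp_0)
  moreover have "(\<Sum>i\<le>degree q. coeff q i * (t ^ i / exp t)) = poly q t / exp t" for t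
    by (simp add: poly_altdef sum_divide_distrib)
  ultimately show ?thesis by simp
qed

lemma flat_lim0: fixes q :: "real poly" shows "((\<lambda>h. poly q (inverse h) * exp (- inverse h) / h) \<longlongrightarrow> 0) (at_right 0)"
proof -
  have "((\<lambda>h. poly ([:0,1:] * q) (inverse h) / exp (inverse h)) \<longlongrightarrow> 0) (at_right (0::real))"
    using filterlim_compose[OF poly_div_exp_lim[of "[:0,1:] * q"] filterlim_inverse_at_top_right] by (simp add: o_def)
  moreover have "poly ([:0,1:] * q) (inverse h) / exp (inverse h) = poly q (inverse h) * exp (- inverse h) / h" for h :: real
    by (simp add: exp_minus field_simps)
  ultimately show ?thesis by simp
qed

lemma GG_deriv: "(GG n has_real_derivative GG (Suc n) x) (at x)"
proof (cases "x > 0")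
  case True
  let ?f = "\<lambda>y. poly (PP n) (inverse y) * exp (- inverse y)"
  have "(?f has_real_derivative GG (Suc n) x) (at x)"
  proof -
    have "(?f has_real_derivative
       poly (pderiv (PP n)) (inverse x) * (- (inverse x ^ 2)) * exp (- inverse x)
        + poly (PP n) (inverse x) * (exp (- inverse x) * (inverse x ^ 2))) (at x)"
      using True
      by (auto intro!: derivative_eq_intros DERIV_chain2[OF poly_DERIV] simp: power2_eq_square)
    moreover have "poly (pderiv (PP n)) (inverse x) * (- (inverse x ^ 2)) * exp (- inverse x)
        + poly (PP n) (inverse x) * (exp (- inverse x) * (inverse x ^ 2)) = GG (Suc n) x"
      using True by (simp add: GG_def algebra_simps power2_eq_square)
    ultimately show ?thesis by simp
  qed
  then show ?thesis
    by (rule has_field_derivative_transform_within_open[where S="{0<..}"]) (use True in \<open>auto simp: GG_def\<close>)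
next
  case False
  show ?thesis
  proof (cases "x < 0")
    case True
    have "((\<lambda>y. 0) has_real_derivative GG (Suc n) x) (at x)"
      using True by (simp add: GG_def)
    then show ?thesis
      by (rule has_field_derivative_transform_within_open[where S="{..<0}"]) (use True in \<open>auto simp: GG_def\<close>)
  next
    case False
    with \<open>\<not> x > 0\<close> have x0: "x = 0" by simp
    have "((\<lambda>h. (GG n (0 + h) - GG n 0) / h) \<longlongrightarrow> 0) (at 0)"
    proof (rule filterlim_split_at_real)
      show "((\<lambda>h. (GG n (0 + h) - GG n 0) / h) \<longlongrightarrow> 0) (at_left 0)"
      proof (rule tendsto_eventually)
        have "\<forall>\<^sub>F h in at_left 0. h < (0::real)"
          using eventually_at_left_real[of "-1" 0] by (rule eventually_mono) auto
        then show "\<forall>\<^sub>F h in at_left 0. (GG n (0 + h) - GG n 0) / h = 0"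
          by (rule eventually_mono) (auto simp: GG_def)
      qed
      have ev: "\<forall>\<^sub>F h in at_right 0. poly (PP n) (inverse h) * exp (- inverse h) / h = (GG n (0 + h) - GG n 0) / h"
      proof -
        have "\<forall>\<^sub>F h in at_right 0. h > (0::real)"
          using eventually_at_right_real[of 0 1] by (rule eventually_mono) auto
        then show ?thesis by (rule eventually_mono) (auto simp: GG_def)
      qed
      show "((\<lambda>h. (GG n (0 + h) - GG n 0) / h) \<longlongrightarrow> 0) (at_right 0)"
        by (rule Lim_transform_eventually[OF flat_lim0 ev])
    qed
    then show ?thesis using x0 by (simp add: DERIV_def GG_def)
  qed
qed

lemma flat_iter: "(deriv ^^ n) flat = GG n"
proof (induction n)
  case 0 then show ?case by (auto simp: flat_def GG_def)
next
  case (Suc n)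
  then show ?case using GG_deriv by (auto intro!: DERIV_imp_deriv)
qed

lemma smooth_flat: "smooth_fun flat"
  unfolding smooth_fun_def flat_iter using GG_deriv real_differentiable_def by blast

lemma flat_pos: "flat x > 0 \<longleftrightarrow> x > 0" and flat_nonneg: "flat x \<ge> 0"
  by (auto simp: flat_def)

definition bumpf :: "real \<Rightarrow> real \<Rightarrow> real \<Rightarrow> real" where
  "bumpf x0 d x = flat ((1/2 - x0/(2*d)) + (1/(2*d)) * x) * flat ((1/2 + x0/(2*d)) + (-1/(2*d)) * x)"

lemma bumpf_lin:
  fixes d x0 x :: real
  assumes "d > 0"
  shows "(1/2 - x0/(2*d)) + (1/(2*d)) * x > 0 \<longleftrightarrow> x0 - d < x"
    and "(1/2 + x0/(2*d)) + (-1/(2*d)) * x > 0 \<longleftrightarrow> x < x0 + d"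
proof -
  have e1: "(1/2 - x0/(2*d)) + (1/(2*d)) * x = (x - (x0 - d)) / (2*d)" using assms by (simp add: field_simps)
  have e2: "(1/2 + x0/(2*d)) + (-1/(2*d)) * x = ((x0 + d) - x) / (2*d)" using assms by (simp add: field_simps)
  show "(1/2 - x0/(2*d)) + (1/(2*d)) * x > 0 \<longleftrightarrow> x0 - d < x"
    unfolding e1 using assms by (simp add: zero_less_divide_iff)
  show "(1/2 + x0/(2*d)) + (-1/(2*d)) * x > 0 \<longleftrightarrow> x < x0 + d"
    unfolding e2 using assms by (simp add: zero_less_divide_iff)
qed

lemma bump_exists:
  assumes "d > 0"
  shows "\<exists>\<phi>. test_fun \<phi> \<and> \<phi> x0 > 0 \<and> (\<forall>x. \<phi> x \<ge> 0) \<and> (\<forall>x. \<phi> x \<noteq> 0 \<longrightarrow> x0 - d < x \<and> x < x0 + d)"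
proof (intro exI conjI allI impI)
  show "smooth": "test_fun (bumpf x0 d)"
    unfolding test_fun_def
  proof
    show "smooth_fun (bumpf x0 d)"
      unfolding bumpf_def by (intro smooth_mult smooth_affine smooth_flat)
    have "{x. bumpf x0 d x \<noteq> 0} \<subseteq> cball x0 d"
    proof
      fix x assume "x \<in> {x. bumpf x0 d x \<noteq> 0}"
      then have "(1/2 - x0/(2*d)) + (1/(2*d)) * x > 0" "(1/2 + x0/(2*d)) + (-1/(2*d)) * x > 0"
        unfolding bumpf_def flat_def by (auto split: if_splits)
      then have "x0 - d < x" "x < x0 + d" using assms bumpf_lin by auto
      then show "x \<in> cball x0 d" by (auto simp: dist_real_def)
    qed
    then show "bounded {x. bumpf x0 d x \<noteq> 0}" using bounded_cball bounded_subset by blast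
  qed
  show "bumpf x0 d x0 > 0" using assms unfolding bumpf_def
    by (intro mult_pos_pos) (auto simp: flat_pos field_simps)
  show "bumpf x0 d x \<ge> 0" for x unfolding bumpf_def by (intro mult_nonneg_nonneg flat_nonneg)
  fix x assume "bumpf x0 d x \<noteq> 0"
  then have "(1/2 - x0/(2*d)) + (1/(2*d)) * x > 0" "(1/2 + x0/(2*d)) + (-1/(2*d)) * x > 0"
    unfolding bumpf_def flat_def by (auto split: if_splits)
  then show "x0 - d < x" "x < x0 + d" using assms bumpf_lin by auto
qed


lemma test_zero: "test_fun (\<lambda>x. 0)"
  unfolding test_fun_def by (simp add: smooth_const)

lemma test_cont: "test_fun \<phi> \<Longrightarrow> continuous_on S \<phi>"
  unfolding test_fun_def by (auto intro: smooth_cont)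

lemma supp_box:
  assumes "bounded {x::real. f x \<noteq> 0}"
  shows "\<exists>R>0. \<forall>x. f x \<noteq> 0 \<longrightarrow> x \<in> {-R..R}"
proof -
  obtain a where a: "\<forall>x\<in>{x. f x \<noteq> 0}. \<bar>x\<bar> \<le> a" using assms bounded_real by blast
  show ?thesis
    by (rule exI[of _ "max a 1"]) (use a in \<open>auto simp: abs_le_iff\<close>)
qed

lemma test_supp: "test_fun \<phi> \<Longrightarrow> \<exists>R>0. \<forall>x. \<phi> x \<noteq> 0 \<longrightarrow> x \<in> {-R..R}"
  unfolding test_fun_def using supp_box by blast

lemma integrable_supp:
  fixes f :: "real \<Rightarrow> 'b::euclidean_space"
  assumes "continuous_on {a..b} f" "\<And>x. f x \<noteq> 0 \<Longrightarrow> x \<in> {a..b}"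
  shows "f integrable_on UNIV" "integral UNIV f = integral {a..b} f"
proof -
  have e: "f = (\<lambda>x. if x \<in> {a..b} then f x else 0)"
    using assms(2) by (intro ext) auto
  have "f integrable_on {a..b}" using assms(1) by (rule integrable_continuous_interval)
  then show "f integrable_on UNIV"
    by (subst e) (simp only: integrable_restrict_UNIV)
  show "integral UNIV f = integral {a..b} f"
    by (subst e) (simp only: integral_restrict_UNIV)
qed

lemma fundamental_pos:
  fixes h :: "real \<Rightarrow> real"
  assumes cont: "continuous_on UNIV h" and pos: "h x0 > 0"
  shows "\<exists>\<phi>. test_fun \<phi> \<and> integral UNIV (\<lambda>x. h x * \<phi> x) \<noteq> 0"
proof -
  have "isCont h x0" using cont by (simp add: continuous_on_eq_continuous_at)
  then obtain d where d0: "d > 0" and d1: "\<And>x. x \<noteq> x0 \<and> norm (x - x0) < d \<Longrightarrow> norm (h x - h x0) < h x0"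
    using pos unfolding isCont_def LIM_eq by blast
  have d: "d > 0" "\<And>x. \<bar>x - x0\<bar> < d \<Longrightarrow> \<bar>h x - h x0\<bar> < h x0"
    using d0 apply simp
    subgoal for x using d1[of x] pos by (cases "x = x0") auto
    done
  obtain \<phi> where \<phi>: "test_fun \<phi>" "\<phi> x0 > 0" "\<And>x. \<phi> x \<ge> 0" "\<And>x. \<phi> x \<noteq> 0 \<Longrightarrow> x0 - d < x \<and> x < x0 + d"
    using bump_exists[OF d(1), of x0] by blast
  let ?f = "\<lambda>x. h x * \<phi> x"
  have fc: "continuous_on S ?f" for S
    using continuous_on_subset[OF cont] test_cont[OF \<phi>(1)] by (intro continuous_on_mult) auto
  have supp: "?f x \<noteq> 0 \<Longrightarrow> x \<in> {x0 - d..x0 + d}" for x using \<phi>(4)[of x] by auto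
  have nn: "?f x \<ge> 0" for x
  proof (cases "\<phi> x = 0")
    case False
    then have "x0 - d < x \<and> x < x0 + d" using \<phi>(4) by blast
    then have "\<bar>x - x0\<bar> < d" by (simp add: abs_less_iff)
    then have "h x > 0" using d(2) by fastforce
    then show ?thesis using \<phi>(3)[of x] by simp
  qed simp
  have "integral UNIV ?f \<noteq> 0"
  proof
    assume "integral UNIV ?f = 0"
    then have "integral {x0-d..x0+d} ?f = 0" using integrable_supp(2)[OF fc supp] by simp
    moreover have "?f integrable_on {x0-d..x0+d}" by (rule integrable_continuous_interval[OF fc])
    ultimately have "(?f has_integral 0) (cbox (x0-d) (x0+d))" by (simp add: has_integral_integral)
    moreover have ne: "box (x0-d) (x0+d) \<noteq> {}" using d(1) by (simp add: box_real)
    moreover have x0in: "x0 \<in> cbox (x0-d) (x0+d)" using d(1) by (simp add: cbox_interval)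
    ultimately have "?f x0 = 0"
      using has_integral_0_cbox_imp_0[OF fc, of "x0-d" "x0+d"] nn by blast
    then show False using pos \<phi>(2) by simp
  qed
  then show ?thesis using \<phi>(1) by blast
qed

lemma fundamental:
  fixes h :: "real \<Rightarrow> real"
  assumes cont: "continuous_on UNIV h"
    and I: "\<And>\<phi>. test_fun \<phi> \<Longrightarrow> integral UNIV (\<lambda>x. h x * \<phi> x) = 0"
  shows "h x0 = 0"
proof (rule ccontr)
  assume ne: "h x0 \<noteq> 0"
  show False
  proof (cases "h x0 > 0")
    case True then show False using fundamental_pos[OF cont True] I by blast
  next
    case False
    with ne have "(\<lambda>x. - h x) x0 > 0" by simp
    have "continuous_on UNIV (\<lambda>x. - h x)" using cont by (intro continuous_intros)
    from fundamental_pos[where h="\<lambda>x. - h x", OF this \<open>(\<lambda>x. - h x) x0 > 0\<close>] obtain \<phi> where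
      "test_fun \<phi>" "integral UNIV (\<lambda>x. - h x * \<phi> x) \<noteq> 0"
      by auto
    moreover have "integral UNIV (\<lambda>x. - h x * \<phi> x) = - integral UNIV (\<lambda>x. h x * \<phi> x)"
      using integral_neg[of UNIV "\<lambda>x. h x * \<phi> x"] by simp
    ultimately show False using I by simp
  qed
qed

lemma fderiv_zero:
  fixes A B :: "real \<Rightarrow> real" and V :: "real \<Rightarrow> real^'n"
  assumes cA: "continuous_on UNIV A" and cB: "continuous_on UNIV B" and cV: "continuous_on UNIV V"
    and I: "\<And>\<phi> \<psi> \<eta>. test_fun \<phi> \<Longrightarrow> test_fun \<psi> \<Longrightarrow> (\<forall>k. test_fun (\<lambda>x. \<eta> x $ k)) \<Longrightarrow>
          integral UNIV (\<lambda>x. A x * \<phi> x + B x * \<psi> x + V x \<bullet> \<eta> x) = 0"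
  shows "A x = 0" "B x = 0" "V x = 0"
proof -
  have z: "\<forall>k. test_fun (\<lambda>x. (0::real^'n) $ k)" by (simp add: test_zero)
  show "A x = 0"
  proof (rule fundamental[OF cA])
    fix \<phi> assume "test_fun \<phi>"
    from I[OF this test_zero z] show "integral UNIV (\<lambda>x. A x * \<phi> x) = 0" by simp
  qed
  show "B x = 0"
  proof (rule fundamental[OF cB])
    fix \<phi> assume "test_fun \<phi>"
    from I[OF test_zero this z] show "integral UNIV (\<lambda>x. B x * \<phi> x) = 0" by simp
  qed
  have "V x $ k = 0" for k
  proof (rule fundamental[where h="\<lambda>x. V x $ k"])
    show "continuous_on UNIV (\<lambda>x. V x $ k)" using cV by (rule continuous_on_component)
    fix \<phi> assume t: "test_fun \<phi>"
    have "\<forall>j. test_fun (\<lambda>x. axis k (\<phi> x) $ j)"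
    proof
      fix j show "test_fun (\<lambda>x. axis k (\<phi> x) $ j)"
        using t test_zero by (cases "j = k") (auto simp: axis_def)
    qed
    from I[OF test_zero test_zero this] show "integral UNIV (\<lambda>x. V x $ k * \<phi> x) = 0"
      by (simp add: inner_axis)
  qed
  then show "V x = 0" by (simp add: vec_eq_iff)
qed


lemma vec_cont: "(\<And>k. continuous_on S (\<lambda>x. \<eta> x $ k)) \<Longrightarrow> continuous_on S (\<eta> :: _ \<Rightarrow> real^'n)"
  using continuous_on_vec_lambda[of S "\<lambda>k x. \<eta> x $ k"] by simp

lemma test_vec_supp:
  assumes "\<forall>k. test_fun (\<lambda>x. \<eta> x $ k)"
  shows "bounded {x. (\<eta> x :: real^'n) \<noteq> 0}"
proof -
  have "{x. \<eta> x \<noteq> 0} \<subseteq> (\<Union>k. {x. \<eta> x $ k \<noteq> 0})" by (auto simp: vec_eq_iff)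
  moreover have "bounded (\<Union>k. {x. \<eta> x $ k \<noteq> 0})"
    using assms unfolding test_fun_def by (intro bounded_UN) auto
  ultimately show ?thesis using bounded_subset by blast
qed

lemma cont_comp3:
  fixes G :: "real \<Rightarrow> real \<Rightarrow> real^'n \<Rightarrow> 'c::topological_space"
  assumes G: "continuous_on (UNIV \<times> UNIV \<times> U) (\<lambda>(r,s,v). G r s v)"
    and a: "continuous_on S a" and b: "continuous_on S b" and c: "continuous_on S c"
    and cU: "\<And>p. p \<in> S \<Longrightarrow> c p \<in> U"
  shows "continuous_on S (\<lambda>p. G (a p) (b p) (c p))"
proof -
  have "continuous_on S (\<lambda>p. (a p, b p, c p))" using a b c by (intro continuous_intros)
  from continuous_on_compose2[OF G this] cU show ?thesis by auto
qed

lemma gateaux: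
  fixes L Lr Ls :: "real \<Rightarrow> real \<Rightarrow> real^'n \<Rightarrow> real"
    and Lv :: "real \<Rightarrow> real \<Rightarrow> real^'n \<Rightarrow> real^'n"
    and U :: "(real^'n) set"
  assumes U: "open U"
    and dL: "\<And>r s v a b c. v \<in> U \<Longrightarrow>
        ((\<lambda>e. L (r + e*a) (s + e*b) (v + e *\<^sub>R c)) has_real_derivative
           (Lr r s v * a + Ls r s v * b + Lv r s v \<bullet> c)) (at 0)"
    and cL: "continuous_on (UNIV \<times> UNIV \<times> U) (\<lambda>(r,s,v). L r s v)"
    and cLr: "continuous_on (UNIV \<times> UNIV \<times> U) (\<lambda>(r,s,v). Lr r s v)"
    and cLs: "continuous_on (UNIV \<times> UNIV \<times> U) (\<lambda>(r,s,v). Ls r s v)"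
    and cLv: "continuous_on (UNIV \<times> UNIV \<times> U) (\<lambda>(r,s,v). Lv r s v)"
    and c\<rho>: "continuous_on UNIV \<rho>" and cu: "continuous_on UNIV u" and cw: "continuous_on UNIV w"
    and wU: "\<And>x. w x \<in> U"
    and t\<phi>: "test_fun \<phi>" and t\<psi>: "test_fun \<psi>" and t\<eta>: "\<forall>k. test_fun (\<lambda>x. \<eta> x $ k)"
  shows "((\<lambda>e. integral UNIV (\<lambda>x. L (\<rho> x + e * \<phi> x) (u x + e * \<psi> x) (w x + e *\<^sub>R \<eta> x)))
     has_real_derivative
       (if (\<lambda>x. L (\<rho> x) (u x) (w x)) integrable_on UNIV
        then integral UNIV (\<lambda>x. Lr (\<rho> x) (u x) (w x) * \<phi> x + Ls (\<rho> x) (u x) (w x) * \<psi> x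
                                 + Lv (\<rho> x) (u x) (w x) \<bullet> \<eta> x)
        else 0)) (at 0)"
proof -
  have c\<phi>: "continuous_on S \<phi>" and c\<psi>: "continuous_on S \<psi>" for S
    using t\<phi> t\<psi> by (auto intro: test_cont)
  have c\<eta>: "continuous_on S \<eta>" for S
    using t\<eta> by (intro vec_cont) (auto intro: test_cont)
  have cS: "continuous_on S \<rho>" "continuous_on S u" "continuous_on S w" for S
    using c\<rho> cu cw by (auto intro: continuous_on_subset)
  have "bounded ({x. \<phi> x \<noteq> 0} \<union> {x. \<psi> x \<noteq> 0} \<union> {x. \<eta> x \<noteq> 0})"
    using t\<phi> t\<psi> test_vec_supp[OF t\<eta>] unfolding test_fun_def by auto
  then obtain a where a: "\<And>x. x \<in> {x. \<phi> x \<noteq> 0} \<union> {x. \<psi> x \<noteq> 0} \<union> {x. \<eta> x \<noteq> 0} \<Longrightarrow> \<bar>x\<bar> \<le> a"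
    unfolding bounded_real by blast
  define R where "R = max a 1"
  have R: "R > 0" "\<And>x. \<phi> x \<noteq> 0 \<or> \<psi> x \<noteq> 0 \<or> \<eta> x \<noteq> 0 \<Longrightarrow> x \<in> {-R..R}"
  proof -
    show "R > 0" unfolding R_def by simp
    fix x assume "\<phi> x \<noteq> 0 \<or> \<psi> x \<noteq> 0 \<or> \<eta> x \<noteq> 0"
    then have "\<bar>x\<bar> \<le> a" using a[of x] by blast
    then show "x \<in> {-R..R}" unfolding R_def by (auto simp: abs_le_iff max_def)
  qed
  define K where "K = {-R..R}"
  have outK: "\<phi> x = 0" "\<psi> x = 0" "\<eta> x = 0" if "x \<notin> K" for x
    using R(2)[of x] that unfolding K_def by auto
  have "compact (w ` K)" unfolding K_def by (intro compact_continuous_image cS compact_Icc)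
  moreover have "w ` K \<subseteq> \<Union>{U}" using wU by auto
  ultimately obtain \<epsilon> where \<epsilon>: "\<epsilon> > 0" "\<And>y. y \<in> w ` K \<Longrightarrow> \<exists>G\<in>{U}. ball y \<epsilon> \<subseteq> G"
    by (rule Heine_Borel_lemma) (use U in auto)
  have "compact (\<eta> ` K)" unfolding K_def by (intro compact_continuous_image c\<eta> compact_Icc)
  then have "bounded (\<eta> ` K)" by (rule compact_imp_bounded)
  then obtain M where M0: "M > 0" and M1: "\<And>y. y \<in> \<eta> ` K \<Longrightarrow> norm y \<le> M"
    unfolding bounded_pos by blast
  have M: "M > 0" "\<And>x. x \<in> K \<Longrightarrow> norm (\<eta> x) \<le> M" using M0 M1 by auto
  define \<delta> where "\<delta> = \<epsilon> / M"
  have \<delta>: "\<delta> > 0" unfolding \<delta>_def using \<epsilon> M by simp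
  define T where "T = ball (0::real) \<delta>"
  have T: "open T" "convex T" "0 \<in> T" unfolding T_def using \<delta> by auto
  have inU: "w x + e *\<^sub>R \<eta> x \<in> U" if "e \<in> T" for e x
  proof (cases "x \<in> K")
    case True
    have "norm (e *\<^sub>R \<eta> x) \<le> \<bar>e\<bar> * M" using M(2)[OF True] by (simp add: mult_left_mono)
    also have "\<dots> < \<delta> * M" using that M(1) unfolding T_def by (simp add: dist_real_def)
    also have "\<dots> = \<epsilon>" unfolding \<delta>_def using M by simp
    finally have "w x + e *\<^sub>R \<eta> x \<in> ball (w x) \<epsilon>" by (simp add: dist_norm)
    moreover have "ball (w x) \<epsilon> \<subseteq> U" using \<epsilon>(2)[of "w x"] True by blast
    ultimately show ?thesis by blast
  next
    case False then show ?thesis using outK wU by simp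
  qed
  have cx: "continuous_on S (\<lambda>x. \<rho> x + e * \<phi> x)" "continuous_on S (\<lambda>x. u x + e * \<psi> x)"
     "continuous_on S (\<lambda>x. w x + e *\<^sub>R \<eta> x)" for S e
    by (intro continuous_on_add continuous_on_mult continuous_on_scaleR continuous_on_const cS c\<phi> c\<psi> c\<eta>)+
  define I where "I = (\<lambda>e x. L (\<rho> x + e * \<phi> x) (u x + e * \<psi> x) (w x + e *\<^sub>R \<eta> x))"
  define D where "D = (\<lambda>e x. I e x - I 0 x)"
  define Fx where "Fx = (\<lambda>e x. Lr (\<rho> x + e * \<phi> x) (u x + e * \<psi> x) (w x + e *\<^sub>R \<eta> x) * \<phi> x
      + Ls (\<rho> x + e * \<phi> x) (u x + e * \<psi> x) (w x + e *\<^sub>R \<eta> x) * \<psi> x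
      + Lv (\<rho> x + e * \<phi> x) (u x + e * \<psi> x) (w x + e *\<^sub>R \<eta> x) \<bullet> \<eta> x)"
  have I0: "I 0 = (\<lambda>x. L (\<rho> x) (u x) (w x))" unfolding I_def by simp
  have Dout: "D e x = 0" if "x \<notin> K" for e x
    using outK[OF that] unfolding D_def I_def by simp
  have Dcont: "continuous_on K (D e)" if "e \<in> T" for e
  proof -
    have "continuous_on K (I e)" unfolding I_def
      by (rule cont_comp3[OF cL cx]) (use inU[OF that] in blast)
    moreover have "continuous_on K (I 0)" unfolding I_def
      by (rule cont_comp3[OF cL cx]) (use inU[OF T(3)] in blast)
    ultimately show ?thesis unfolding D_def by (rule continuous_on_diff)
  qed
  have Dint: "D e integrable_on UNIV" "integral UNIV (D e) = integral K (D e)" if "e \<in> T" for e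
  proof -
    have c: "continuous_on {-R..R} (D e)" using Dcont[OF that] unfolding K_def .
    have s: "\<And>x. D e x \<noteq> 0 \<Longrightarrow> x \<in> {-R..R}" using Dout unfolding K_def by blast
    show "D e integrable_on UNIV" "integral UNIV (D e) = integral K (D e)"
      using integrable_supp[OF c s] unfolding K_def by blast+
  qed
  have Fxcont: "continuous_on (T \<times> K) (\<lambda>(e, x). Fx e x)"
  proof -
    have c1: "continuous_on (T \<times> K) (\<lambda>p. \<rho> (snd p) + fst p * \<phi> (snd p))"
      "continuous_on (T \<times> K) (\<lambda>p. u (snd p) + fst p * \<psi> (snd p))"
      "continuous_on (T \<times> K) (\<lambda>p. w (snd p) + fst p *\<^sub>R \<eta> (snd p))"
      "continuous_on (T \<times> K) (\<lambda>p. \<phi> (snd p))" "continuous_on (T \<times> K) (\<lambda>p. \<psi> (snd p))"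
      "continuous_on (T \<times> K) (\<lambda>p. \<eta> (snd p))"
    proof -
      have sn: "continuous_on (T \<times> K) (\<lambda>p. \<rho> (snd p))" "continuous_on (T \<times> K) (\<lambda>p. u (snd p))"
        "continuous_on (T \<times> K) (\<lambda>p. w (snd p))" "continuous_on (T \<times> K) (\<lambda>p. \<phi> (snd p))"
        "continuous_on (T \<times> K) (\<lambda>p. \<psi> (snd p))" "continuous_on (T \<times> K) (\<lambda>p. \<eta> (snd p))"
      proof -
        have sd: "continuous_on (T \<times> K) (\<lambda>p. snd p)" by (rule continuous_on_snd[OF continuous_on_id])
        show "continuous_on (T \<times> K) (\<lambda>p. \<rho> (snd p))" "continuous_on (T \<times> K) (\<lambda>p. u (snd p))"
          "continuous_on (T \<times> K) (\<lambda>p. w (snd p))" "continuous_on (T \<times> K) (\<lambda>p. \<phi> (snd p))"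
          "continuous_on (T \<times> K) (\<lambda>p. \<psi> (snd p))" "continuous_on (T \<times> K) (\<lambda>p. \<eta> (snd p))"
          using continuous_on_compose2[OF c\<rho> sd] continuous_on_compose2[OF cu sd]
           continuous_on_compose2[OF cw sd] continuous_on_compose2[OF c\<phi>[of UNIV] sd]
           continuous_on_compose2[OF c\<psi>[of UNIV] sd] continuous_on_compose2[OF c\<eta>[of UNIV] sd] by auto
      qed
      have fs: "continuous_on (T \<times> K) (\<lambda>p. fst p)" by (rule continuous_on_fst[OF continuous_on_id])
      show "continuous_on (T \<times> K) (\<lambda>p. \<rho> (snd p) + fst p * \<phi> (snd p))"
        "continuous_on (T \<times> K) (\<lambda>p. u (snd p) + fst p * \<psi> (snd p))"
        "continuous_on (T \<times> K) (\<lambda>p. w (snd p) + fst p *\<^sub>R \<eta> (snd p))"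
        "continuous_on (T \<times> K) (\<lambda>p. \<phi> (snd p))" "continuous_on (T \<times> K) (\<lambda>p. \<psi> (snd p))"
        "continuous_on (T \<times> K) (\<lambda>p. \<eta> (snd p))"
        using sn fs by (auto intro: continuous_on_add continuous_on_mult continuous_on_scaleR)
    qed
    have inU': "\<And>p. p \<in> T \<times> K \<Longrightarrow> w (snd p) + fst p *\<^sub>R \<eta> (snd p) \<in> U" using inU by auto
    have "continuous_on (T \<times> K) (\<lambda>p. Fx (fst p) (snd p))" unfolding Fx_def
      by (intro continuous_on_add continuous_on_mult continuous_on_inner cont_comp3[OF cLr c1(1-3) inU'] cont_comp3[OF cLs c1(1-3) inU']
          cont_comp3[OF cLv c1(1-3) inU'] c1(4-6))
    then show ?thesis by (simp add: case_prod_beta)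
  qed
  have Dder: "((\<lambda>e. D e x) has_field_derivative Fx e x) (at e within T)" if "e \<in> T" "x \<in> K" for e x
  proof -
    have "((\<lambda>t. L ((\<rho> x + e * \<phi> x) + t * \<phi> x) ((u x + e * \<psi> x) + t * \<psi> x) ((w x + e *\<^sub>R \<eta> x) + t *\<^sub>R \<eta> x))
        has_real_derivative Fx e x) (at 0)"
      unfolding Fx_def by (rule dL[OF inU[OF that(1)]])
    moreover have "(\<lambda>t. L ((\<rho> x + e * \<phi> x) + t * \<phi> x) ((u x + e * \<psi> x) + t * \<psi> x) ((w x + e *\<^sub>R \<eta> x) + t *\<^sub>R \<eta> x))
        = (\<lambda>t. I (t + e) x)"
      unfolding I_def by (intro ext) (simp add: algebra_simps)
    ultimately have "((\<lambda>t. I (t + e) x) has_real_derivative Fx e x) (at 0)" by simp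
    then have "((\<lambda>e. I e x) has_real_derivative Fx e x) (at (0 + e))"
      by (subst DERIV_shift) simp
    then have "((\<lambda>e. I e x - I 0 x) has_real_derivative Fx e x - 0) (at e)"
      by (intro derivative_intros) simp
    then show ?thesis unfolding D_def by (simp add: has_field_derivative_at_within)
  qed
  have Dintk: "D e integrable_on K" if "e \<in> T" for e
    using Dcont[OF that] unfolding K_def by (rule integrable_continuous_interval)
  have Kc: "K = cbox (-R) R" by (simp add: K_def cbox_interval)
  have leib: "((\<lambda>e. integral K (D e)) has_field_derivative integral K (Fx 0)) (at 0 within T)"
    unfolding Kc
    by (rule leibniz_rule_field_derivative[OF Dder[unfolded Kc] Dintk[unfolded Kc]
          Fxcont[unfolded Kc] T(3) T(2)])
  then have leib': "((\<lambda>e. integral K (D e)) has_field_derivative integral K (Fx 0)) (at 0)"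
    using at_within_open[OF T(3) T(1)] by simp
  have Fx0: "Fx 0 = (\<lambda>x. Lr (\<rho> x) (u x) (w x) * \<phi> x + Ls (\<rho> x) (u x) (w x) * \<psi> x + Lv (\<rho> x) (u x) (w x) \<bullet> \<eta> x)"
    unfolding Fx_def by simp
  have Fx0int: "integral UNIV (Fx 0) = integral K (Fx 0)"
  proof -
    have "continuous_on {-R..R} (Fx 0)"
    proof -
      have "continuous_on {-R..R} (\<lambda>x. (0::real, x))" by (intro continuous_on_Pair continuous_on_const continuous_on_id)
      from continuous_on_compose2[OF Fxcont this] T(3) show ?thesis unfolding K_def by auto
    qed
    moreover have "Fx 0 x \<noteq> 0 \<Longrightarrow> x \<in> {-R..R}" for x
    proof (rule ccontr)
      assume "Fx 0 x \<noteq> 0" "x \<notin> {-R..R}"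
      then show False using outK[of x] unfolding Fx_def K_def by simp
    qed
    ultimately show ?thesis using integrable_supp(2) unfolding K_def by blast
  qed
  show ?thesis
  proof (cases "(\<lambda>x. L (\<rho> x) (u x) (w x)) integrable_on UNIV")
    case True
    have eq: "integral UNIV (I e) = integral UNIV (I 0) + integral K (D e)" if "e \<in> T" for e
    proof -
      have "I e = (\<lambda>x. I 0 x + D e x)" unfolding D_def by simp
      then have "integral UNIV (I e) = integral UNIV (I 0) + integral UNIV (D e)"
        using True Dint(1)[OF that] unfolding I0 by (simp add: integral_add)
      then show ?thesis using Dint(2)[OF that] by simp
    qed
    have "((\<lambda>e. integral UNIV (I 0) + integral K (D e)) has_field_derivative integral K (Fx 0)) (at 0)"
      using leib' by (auto intro!: derivative_eq_intros)
    then have "((\<lambda>e. integral UNIV (I e)) has_field_derivative integral K (Fx 0)) (at 0)"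
      by (rule has_field_derivative_transform_within_open[OF _ T(1) T(3)]) (use eq in auto)
    then show ?thesis using True Fx0int Fx0 unfolding I_def by simp
  next
    case False
    have z: "integral UNIV (I e) = 0" if "e \<in> T" for e
    proof -
      have "\<not> I e integrable_on UNIV"
      proof
        assume "I e integrable_on UNIV"
        then have "(\<lambda>x. I e x - D e x) integrable_on UNIV" using Dint(1)[OF that] by (rule integrable_diff)
        then have "I 0 integrable_on UNIV" unfolding D_def by simp
        then show False using False I0 by simp
      qed
      then show ?thesis by (rule not_integrable_integral)
    qed
    have "((\<lambda>e. 0) has_field_derivative 0) (at 0)" by simp
    then have "((\<lambda>e. integral UNIV (I e)) has_field_derivative 0) (at 0)"
      by (rule has_field_derivative_transform_within_open[OF _ T(1) T(3)]) (use z in auto)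
    then show ?thesis using False unfolding I_def by simp
  qed
qed


lemma tests_box:
  assumes t\<phi>: "test_fun \<phi>" and t\<psi>: "test_fun \<psi>" and t\<eta>: "\<forall>k. test_fun (\<lambda>x. (\<eta> x :: real^'n) $ k)"
  shows "\<exists>R>0. \<forall>x. (\<phi> x \<noteq> 0 \<or> \<psi> x \<noteq> 0 \<or> \<eta> x \<noteq> 0) \<longrightarrow> x \<in> {-R..R}"
proof -
  have "bounded ({x. \<phi> x \<noteq> 0} \<union> {x. \<psi> x \<noteq> 0} \<union> {x. \<eta> x \<noteq> 0})"
    using t\<phi> t\<psi> test_vec_supp[OF t\<eta>] unfolding test_fun_def by auto
  then obtain a where a: "\<And>x. x \<in> {x. \<phi> x \<noteq> 0} \<union> {x. \<psi> x \<noteq> 0} \<union> {x. \<eta> x \<noteq> 0} \<Longrightarrow> \<bar>x\<bar> \<le> a"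
    unfolding bounded_real by blast
  show ?thesis
  proof (intro exI[of _ "max a 1"] conjI allI impI)
    show "max a 1 > 0" by simp
    fix x assume "\<phi> x \<noteq> 0 \<or> \<psi> x \<noteq> 0 \<or> \<eta> x \<noteq> 0"
    then have "\<bar>x\<bar> \<le> a" using a[of x] by blast
    then show "x \<in> {-max a 1..max a 1}" by (auto simp: abs_le_iff max_def)
  qed
qed

lemma tests_integrable:
  fixes A B :: "real \<Rightarrow> real" and V :: "real \<Rightarrow> real^'n"
  assumes cA: "continuous_on UNIV A" and cB: "continuous_on UNIV B" and cV: "continuous_on UNIV V"
    and t\<phi>: "test_fun \<phi>" and t\<psi>: "test_fun \<psi>" and t\<eta>: "\<forall>k. test_fun (\<lambda>x. \<eta> x $ k)"
  shows "(\<lambda>x. A x * \<phi> x + B x * \<psi> x + V x \<bullet> \<eta> x) integrable_on UNIV"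
proof -
  obtain R where R: "\<And>x. (\<phi> x \<noteq> 0 \<or> \<psi> x \<noteq> 0 \<or> \<eta> x \<noteq> 0) \<Longrightarrow> x \<in> {-R..R}"
    using tests_box[OF t\<phi> t\<psi> t\<eta>] by blast
  have c\<eta>: "continuous_on S \<eta>" for S
    using t\<eta> by (intro vec_cont) (auto intro: test_cont)
  have "continuous_on {-R..R} (\<lambda>x. A x * \<phi> x + B x * \<psi> x + V x \<bullet> \<eta> x)"
    by (intro continuous_on_add continuous_on_mult continuous_on_inner continuous_on_subset[OF cA]
        continuous_on_subset[OF cB] continuous_on_subset[OF cV] test_cont[OF t\<phi>] test_cont[OF t\<psi>] c\<eta>) auto
  moreover have "A x * \<phi> x + B x * \<psi> x + V x \<bullet> \<eta> x \<noteq> 0 \<Longrightarrow> x \<in> {-R..R}" for x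
  proof (rule ccontr)
    assume "A x * \<phi> x + B x * \<psi> x + V x \<bullet> \<eta> x \<noteq> 0" "x \<notin> {-R..R}"
    then have "\<not> (\<phi> x \<noteq> 0 \<or> \<psi> x \<noteq> 0 \<or> \<eta> x \<noteq> 0)" using R[of x] by blast
    then show False using \<open>A x * \<phi> x + B x * \<psi> x + V x \<bullet> \<eta> x \<noteq> 0\<close> by simp
  qed
  ultimately show ?thesis by (rule integrable_supp(1))
qed

lemma C1_cont: "C1_fun f \<Longrightarrow> continuous_on S f"
  unfolding C1_fun_def
  by (meson continuous_at_imp_continuous_on differentiable_imp_continuous_within)

lemma field_cont: "field f \<Longrightarrow> continuous_on S f"
  unfolding field_def by (auto intro: smooth_cont)

lemma identify:
  fixes L Lr Ls :: "real \<Rightarrow> real \<Rightarrow> real^'n \<Rightarrow> real"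
    and Lv :: "real \<Rightarrow> real \<Rightarrow> real^'n \<Rightarrow> real^'n"
    and U :: "(real^'n) set"
  assumes U: "open U"
    and dL: "\<And>r s v a b c. v \<in> U \<Longrightarrow>
        ((\<lambda>e. L (r + e*a) (s + e*b) (v + e *\<^sub>R c)) has_real_derivative
           (Lr r s v * a + Ls r s v * b + Lv r s v \<bullet> c)) (at 0)"
    and cL: "continuous_on (UNIV \<times> UNIV \<times> U) (\<lambda>(r,s,v). L r s v)"
    and cLr: "continuous_on (UNIV \<times> UNIV \<times> U) (\<lambda>(r,s,v). Lr r s v)"
    and cLs: "continuous_on (UNIV \<times> UNIV \<times> U) (\<lambda>(r,s,v). Ls r s v)"
    and cLv: "continuous_on (UNIV \<times> UNIV \<times> U) (\<lambda>(r,s,v). Lv r s v)"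
    and adm: "admissible_state U \<rho> u w"
    and hC: "has_fderivs C \<rho> u w C\<rho> Cu Cw"
    and Ceq: "\<And>\<rho>' u' w'. C \<rho>' u' w' = integral UNIV (\<lambda>x. L (\<rho>' x) (u' x) (w' x))"
  shows "(\<lambda>x. L (\<rho> x) (u x) (w x)) integrable_on UNIV \<Longrightarrow>
           C\<rho> x = Lr (\<rho> x) (u x) (w x) \<and> Cu x = Ls (\<rho> x) (u x) (w x) \<and> Cw x = Lv (\<rho> x) (u x) (w x)"
    and "\<not> (\<lambda>x. L (\<rho> x) (u x) (w x)) integrable_on UNIV \<Longrightarrow> C\<rho> x = 0 \<and> Cu x = 0 \<and> Cw x = 0"
proof -
  have c\<rho>: "continuous_on UNIV \<rho>" and cu: "continuous_on UNIV u" and cw: "continuous_on UNIV w"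
    and wU: "\<And>x. w x \<in> U"
    using adm unfolding admissible_state_def by (auto intro: field_cont vec_cont)
  have cC: "continuous_on UNIV C\<rho>" "continuous_on UNIV Cu" "continuous_on UNIV Cw"
    using hC unfolding has_fderivs_def by (auto intro: C1_cont vec_cont)
  define intg where "intg = ((\<lambda>x. L (\<rho> x) (u x) (w x)) integrable_on UNIV)"
  define K\<rho> where "K\<rho> = (\<lambda>x. if intg then Lr (\<rho> x) (u x) (w x) else 0)"
  define Ku where "Ku = (\<lambda>x. if intg then Ls (\<rho> x) (u x) (w x) else 0)"
  define Kw where "Kw = (\<lambda>x. if intg then Lv (\<rho> x) (u x) (w x) else 0)"
  have cK: "continuous_on UNIV K\<rho>" "continuous_on UNIV Ku" "continuous_on UNIV Kw"
    unfolding K\<rho>_def Ku_def Kw_def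
    by (cases intg; simp add: cont_comp3[OF cLr c\<rho> cu cw wU] cont_comp3[OF cLs c\<rho> cu cw wU]
        cont_comp3[OF cLv c\<rho> cu cw wU])+
  have key: "integral UNIV (\<lambda>x. (C\<rho> x - K\<rho> x) * \<phi> x + (Cu x - Ku x) * \<psi> x + (Cw x - Kw x) \<bullet> \<eta> x) = 0"
    if t\<phi>: "test_fun \<phi>" and t\<psi>: "test_fun \<psi>" and t\<eta>: "\<forall>k. test_fun (\<lambda>x. \<eta> x $ k)" for \<phi> \<psi> \<eta>
  proof -
    have d1: "((\<lambda>e. C (\<lambda>x. \<rho> x + e * \<phi> x) (\<lambda>x. u x + e * \<psi> x) (\<lambda>x. w x + e *\<^sub>R \<eta> x))
          has_real_derivative integral UNIV (\<lambda>x. C\<rho> x * \<phi> x + Cu x * \<psi> x + Cw x \<bullet> \<eta> x)) (at 0)"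
      using hC t\<phi> t\<psi> t\<eta> unfolding has_fderivs_def by blast
    have d2: "((\<lambda>e. C (\<lambda>x. \<rho> x + e * \<phi> x) (\<lambda>x. u x + e * \<psi> x) (\<lambda>x. w x + e *\<^sub>R \<eta> x))
          has_real_derivative integral UNIV (\<lambda>x. K\<rho> x * \<phi> x + Ku x * \<psi> x + Kw x \<bullet> \<eta> x)) (at 0)"
      unfolding Ceq
      using gateaux[OF U dL cL cLr cLs cLv c\<rho> cu cw wU t\<phi> t\<psi> t\<eta>]
      unfolding K\<rho>_def Ku_def Kw_def intg_def by (cases intg) (simp_all add: intg_def)
    have eq: "integral UNIV (\<lambda>x. C\<rho> x * \<phi> x + Cu x * \<psi> x + Cw x \<bullet> \<eta> x)
        = integral UNIV (\<lambda>x. K\<rho> x * \<phi> x + Ku x * \<psi> x + Kw x \<bullet> \<eta> x)"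
      using DERIV_unique[OF d1 d2] .
    have i1: "(\<lambda>x. C\<rho> x * \<phi> x + Cu x * \<psi> x + Cw x \<bullet> \<eta> x) integrable_on UNIV"
      by (rule tests_integrable[OF cC t\<phi> t\<psi> t\<eta>])
    have i2: "(\<lambda>x. K\<rho> x * \<phi> x + Ku x * \<psi> x + Kw x \<bullet> \<eta> x) integrable_on UNIV"
      by (rule tests_integrable[OF cK t\<phi> t\<psi> t\<eta>])
    have "(\<lambda>x. (C\<rho> x - K\<rho> x) * \<phi> x + (Cu x - Ku x) * \<psi> x + (Cw x - Kw x) \<bullet> \<eta> x)
        = (\<lambda>x. (C\<rho> x * \<phi> x + Cu x * \<psi> x + Cw x \<bullet> \<eta> x) - (K\<rho> x * \<phi> x + Ku x * \<psi> x + Kw x \<bullet> \<eta> x))"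
      by (intro ext) (simp add: algebra_simps inner_diff_left)
    then show ?thesis using integral_diff[OF i1 i2] eq by simp
  qed
  have cD: "continuous_on UNIV (\<lambda>x. C\<rho> x - K\<rho> x)" "continuous_on UNIV (\<lambda>x. Cu x - Ku x)"
    "continuous_on UNIV (\<lambda>x. Cw x - Kw x)"
    using cC cK by (auto intro: continuous_on_diff)
  have z: "C\<rho> x - K\<rho> x = 0" "Cu x - Ku x = 0" "Cw x - Kw x = 0"
    using fderiv_zero[OF cD key] by blast+
  show "(\<lambda>x. L (\<rho> x) (u x) (w x)) integrable_on UNIV \<Longrightarrow>
           C\<rho> x = Lr (\<rho> x) (u x) (w x) \<and> Cu x = Ls (\<rho> x) (u x) (w x) \<and> Cw x = Lv (\<rho> x) (u x) (w x)"
    using z unfolding K\<rho>_def Ku_def Kw_def intg_def by simp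
  show "\<not> (\<lambda>x. L (\<rho> x) (u x) (w x)) integrable_on UNIV \<Longrightarrow> C\<rho> x = 0 \<and> Cu x = 0 \<and> Cw x = 0"
    using z unfolding K\<rho>_def Ku_def Kw_def intg_def by simp
qed


lemma minv: 
  fixes A :: "real^'n^'n"
  assumes "invertible A"
  shows "A ** matrix_inv A = mat 1" "matrix_inv A ** A = mat 1"
proof -
  have "\<exists>A'. A ** A' = mat 1 \<and> A' ** A = mat 1" using assms unfolding invertible_def by blast
  then have "A ** matrix_inv A = mat 1 \<and> matrix_inv A ** A = mat 1"
    unfolding matrix_inv_def by (rule someI_ex)
  then show "A ** matrix_inv A = mat 1" "matrix_inv A ** A = mat 1" by auto
qed

lemma minv_sym:
  fixes g :: "real^'n^'n"
  assumes "invertible g" "transpose g = g"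
  shows "transpose (matrix_inv g) = matrix_inv g"
proof -
  have "transpose (matrix_inv g) ** g = mat 1"
    using arg_cong[OF minv(1)[OF assms(1)], of transpose] assms(2)
    by (simp add: matrix_transpose_mul transpose_mat)
  then have "transpose (matrix_inv g) ** g ** matrix_inv g = matrix_inv g" by (simp add: matrix_mul_lid)
  then show ?thesis using minv(1)[OF assms(1)] by (simp add: matrix_mul_assoc[symmetric] matrix_mul_rid)
qed

lemma mat_rdistrib: "((A::real^'n^'m) + B) ** (C::real^'k^'n) = A ** C + B ** C"
  by (simp add: matrix_matrix_mult_def vec_eq_iff sum.distrib distrib_right)

lemma mat_lzero: "(0::real^'n^'m) ** (C::real^'k^'n) = 0"
  by (simp add: matrix_matrix_mult_def vec_eq_iff)

lemma flat_zero:
  fixes J Dm A B :: "real^'n^'n"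
  assumes "invertible J" "Dm ** A ** transpose J + J ** B ** transpose J = 0"
  shows "Dm ** A + J ** B = 0"
proof -
  have it: "invertible (transpose J)" using assms(1) by (rule transpose_invertible)
  have "(Dm ** A + J ** B) ** transpose J = 0"
    using assms(2) by (simp add: mat_rdistrib)
  then have "(Dm ** A + J ** B) ** transpose J ** matrix_inv (transpose J) = 0"
    by (simp add: mat_lzero)
  then have "(Dm ** A + J ** B) ** (transpose J ** matrix_inv (transpose J)) = 0"
    by (simp add: matrix_mul_assoc)
  then show ?thesis using minv(1)[OF it] by simp
qed

lemma flat_id:
  fixes J A g :: "real^'n^'n"
  assumes "invertible J" "invertible g" "J ** A ** transpose J = g" "transpose A = A"
  shows "transpose (J ** A) ** matrix_inv g ** J = mat 1"
proof -
  have "transpose (J ** A) = A ** transpose J" using assms(4) by (simp add: matrix_transpose_mul)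
  moreover have "A ** transpose J = matrix_inv J ** g"
  proof -
    have "matrix_inv J ** (J ** A ** transpose J) = matrix_inv J ** g" using assms(3) by simp
    moreover have "matrix_inv J ** (J ** A ** transpose J) = (matrix_inv J ** J) ** (A ** transpose J)"
      by (simp add: matrix_mul_assoc)
    ultimately show ?thesis using minv(2)[OF assms(1)] by simp
  qed
  ultimately have "transpose (J ** A) ** matrix_inv g ** J = matrix_inv J ** (g ** matrix_inv g) ** J"
    by (simp add: matrix_mul_assoc)
  also have "\<dots> = matrix_inv J ** J" using minv[OF assms(2)] by simp
  also have "\<dots> = mat 1" using minv[OF assms(1)] by simp
  finally show ?thesis .
qed

lemma dsum_inner:
  fixes X b :: "real^'n" and A :: "real^'n^'n"
  shows "(\<Sum>k\<in>UNIV. \<Sum>l\<in>UNIV. X $ k * A $ k $ l * b $ l) = X \<bullet> (A *v b)"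
  by (simp add: inner_vec_def matrix_vector_mult_def sum_distrib_left mult.assoc)

lemma inner_vm: "(x v* A) \<bullet> y = x \<bullet> (A *v (y::real^'n))"
  by (rule dot_lmul_matrix)

lemma integral_deriv_decay:
  fixes h h' :: "real \<Rightarrow> real"
  assumes der: "\<And>x. (h has_real_derivative h' x) (at x)" and dec: "(h \<longlongrightarrow> 0) at_infinity"
  shows "integral UNIV h' = 0"
proof (cases "h' integrable_on UNIV")
  case False then show ?thesis by (rule not_integrable_integral)
next
  case True
  define y where "y = integral UNIV h'"
  have hi: "(h' has_integral y) UNIV" using True unfolding y_def by (rule integrable_integral)
  have nb: "\<not> (\<exists>a b. (UNIV::real set) = cbox a b)"
    using not_bounded_UNIV bounded_cbox by metis
  have "\<bar>y\<bar> < 3 * e" if e: "e > 0" for e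
  proof -
    obtain B where B: "B > 0" "\<forall>a b. ball 0 B \<subseteq> cbox a b \<longrightarrow>
        (\<exists>z. ((\<lambda>x. if x \<in> UNIV then h' x else 0) has_integral z) (cbox a b) \<and> norm (z - y) < e)"
      using has_integral_altD[OF hi nb e] by blast
    obtain N where N: "\<And>x. N \<le> norm x \<Longrightarrow> \<bar>h x\<bar> < e"
      using dec e unfolding tendsto_iff eventually_at_infinity by (auto simp: dist_real_def)
    define c where "c = max B N + 1"
    have c: "c > 0" "B < c" "N \<le> norm c" "N \<le> norm (-c)" unfolding c_def using B by auto
    have "ball 0 B \<subseteq> cbox (-c) c" using c by (auto simp: dist_real_def cbox_interval)
    from B(2)[rule_format, OF this] obtain z where z: "(h' has_integral z) (cbox (-c) c)" "norm (z - y) < e"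
      by auto
    have "(h' has_integral (h c - h (-c))) {-c..c}"
      using c(1) by (intro fundamental_theorem_of_calculus)
        (auto simp: has_real_derivative_iff_has_vector_derivative[symmetric] intro: has_field_derivative_at_within der)
    then have "z = h c - h (-c)" using z(1) by (simp add: cbox_interval has_integral_unique)
    then show ?thesis using z(2) N[OF c(3)] N[OF c(4)] by auto
  qed
  then have "y = 0"
  proof -
    assume A: "\<And>e. e > 0 \<Longrightarrow> \<bar>y\<bar> < 3 * e"
    show "y = 0"
    proof (rule ccontr)
      assume "y \<noteq> 0"
      then have "\<bar>y\<bar> / 3 > 0" by simp
      from A[OF this] show False by simp
    qed
  qed
  then show ?thesis unfolding y_def by simp
qed


lemma smult_scaleR: "(c *s (v::real^'n)) = c *\<^sub>R v"
  by (simp add: vec_eq_iff)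

lemma vec_from_comp_vd:
  fixes w :: "real \<Rightarrow> real^'n"
  assumes "\<And>k. ((\<lambda>y. w y $ k) has_real_derivative D $ k) (at x)"
  shows "(w has_vector_derivative D) (at x)"
proof -
  have e: "w = (\<lambda>y. \<Sum>i\<in>UNIV. w y $ i *\<^sub>R axis i 1)"
    by (intro ext) (simp add: basis_expansion smult_scaleR[symmetric])
  have d: "((\<lambda>y. \<Sum>i\<in>UNIV. w y $ i *\<^sub>R axis i 1) has_vector_derivative (\<Sum>i\<in>UNIV. D $ i *\<^sub>R axis i 1)) (at x)"
    by (intro has_vector_derivative_sum has_vector_derivative_scaleR[where g'=0, THEN has_vector_derivative_eq_rhs]
          has_vector_derivative_const) (auto intro: assms)
  have sD: "(\<Sum>i\<in>UNIV. D $ i *\<^sub>R axis i 1) = D" by (simp add: basis_expansion smult_scaleR[symmetric])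
  have A: "((\<lambda>y. \<Sum>i\<in>UNIV. w y $ i *\<^sub>R axis i 1) has_vector_derivative D) (at x)"
    by (rule has_vector_derivative_eq_rhs[OF d sD])
  show ?thesis by (subst e) (rule A)
qed

lemma field_DERIV: "field f \<Longrightarrow> (f has_real_derivative deriv f x) (at x)"
  unfolding field_def by (auto intro: smooth_DERIV)

lemma C1_DERIV: "C1_fun f \<Longrightarrow> (f has_real_derivative deriv f x) (at x)"
  unfolding C1_fun_def by (simp add: DERIV_deriv_iff_real_differentiable)

lemma w_vd:
  assumes "admissible_state U \<rho> u w"
  shows "(w has_vector_derivative dx_vec w x) (at x)"
proof (rule vec_from_comp_vd)
  fix k show "((\<lambda>y. w y $ k) has_real_derivative dx_vec w x $ k) (at x)"
    using assms unfolding admissible_state_def dx_vec_def by (auto intro: field_DERIV)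
qed

lemma nu_vd:
  assumes "admissible_state U \<rho> u w" "local_coordinates U \<nu> J DJ"
  shows "((\<lambda>y. \<nu> (w y)) has_vector_derivative J (w x) *v dx_vec w x) (at x)"
proof -
  have wU: "w x \<in> U" using assms(1) unfolding admissible_state_def by auto
  have d1: "(w has_derivative (\<lambda>t. t *\<^sub>R dx_vec w x)) (at x)"
    using w_vd[OF assms(1)] unfolding has_vector_derivative_def .
  have d2: "(\<nu> has_derivative (\<lambda>v. J (w x) *v v)) (at (w x))"
    using assms(2) wU unfolding local_coordinates_def by auto
  from diff_chain_at[OF d1 d2] have "((\<lambda>y. \<nu> (w y)) has_derivative (\<lambda>t. t *\<^sub>R (J (w x) *v dx_vec w x))) (at x)"
    by (simp add: o_def matrix_vector_mult_scaleR)
  then show ?thesis unfolding has_vector_derivative_def .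
qed

lemma J_vd:
  assumes "admissible_state U \<rho> u w" "local_coordinates U \<nu> J DJ"
  shows "((\<lambda>y. J (w y)) has_vector_derivative DJ (w x) (dx_vec w x)) (at x)"
proof -
  have wU: "w x \<in> U" using assms(1) unfolding admissible_state_def by auto
  have d1: "(w has_derivative (\<lambda>t. t *\<^sub>R dx_vec w x)) (at x)"
    using w_vd[OF assms(1)] unfolding has_vector_derivative_def .
  have d2: "(J has_derivative DJ (w x)) (at (w x))"
    using assms(2) wU unfolding local_coordinates_def by auto
  have lin: "linear (DJ (w x))" using d2 by (rule has_derivative_linear)
  from diff_chain_at[OF d1 d2] have "((\<lambda>y. J (w y)) has_derivative (\<lambda>t. t *\<^sub>R DJ (w x) (dx_vec w x))) (at x)"
    by (simp add: o_def linear_cmul[OF lin])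
  then show ?thesis unfolding has_vector_derivative_def .
qed

lemma bl_real_deriv:
  assumes "bounded_linear f" "(g has_vector_derivative g') (at x)"
  shows "((\<lambda>y. f (g y)) has_real_derivative (f g' :: real)) (at x)"
  using bounded_linear.has_vector_derivative[OF assms]
  by (simp add: has_real_derivative_iff_has_vector_derivative)

lemma bl_nth: "bounded_linear (\<lambda>v::real^'n. v $ k)" by (rule bounded_linear_vec_nth)
lemma bl_nth2: "bounded_linear (\<lambda>M::real^'n^'m. M $ i $ k)"
  by (rule bounded_linear_compose[of "\<lambda>v. v $ k" "\<lambda>M. M $ i"]) (rule bounded_linear_vec_nth)+
lemma bl_mv: "bounded_linear (\<lambda>v::real^'n. (A::real^'n^'m) *v v)" by (rule matrix_vector_mul_bounded_linear)

lemma w_lim: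
  assumes "admissible_state U \<rho> u w"
  shows "(w \<longlongrightarrow> 0) at_infinity"
proof (rule vec_tendstoI)
  fix i
  have "field (\<lambda>x. w x $ i)" using assms unfolding admissible_state_def by auto
  then have "decays ((deriv ^^ 0) (\<lambda>x. w x $ i))" unfolding field_def by blast
  then show "((\<lambda>x. w x $ i) \<longlongrightarrow> 0 $ i) at_infinity" unfolding decays_def by simp
qed

lemma nu_lim:
  assumes "admissible_state U \<rho> u w" "local_coordinates U \<nu> J DJ" "0 \<in> U"
  shows "((\<lambda>y. \<nu> (w y)) \<longlongrightarrow> \<nu> 0) at_infinity"
proof -
  have "(\<nu> has_derivative (\<lambda>v. J 0 *v v)) (at 0)" using assms(2,3) unfolding local_coordinates_def by auto
  then have "isCont \<nu> 0" by (rule has_derivative_continuous)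
  from isCont_tendsto_compose[OF this w_lim[OF assms(1)]] show ?thesis .
qed

lemma nu_cont:
  assumes "local_coordinates U \<nu> J DJ"
  shows "continuous_on U \<nu>" "continuous_on U J"
proof -
  show "continuous_on U \<nu>"
    using assms unfolding local_coordinates_def
    by (intro has_derivative_continuous_on) (auto intro: has_derivative_at_withinI)
  show "continuous_on U J"
    using assms unfolding local_coordinates_def
    by (intro has_derivative_continuous_on) (auto intro: has_derivative_at_withinI)
qed


lemma deriv_const0: "deriv (\<lambda>x. c) x = (0::real)"
  by (rule DERIV_imp_deriv) simp

lemma bracket_zero: "pd_bracket \<alpha> \<beta> \<rho> w (\<lambda>x. 0) (\<lambda>x. 0) (\<lambda>x. 0) F\<rho> Fu Fw = 0"
  by (simp add: pd_bracket_def deriv_const0)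

lemma casimir_rho_thm:
  assumes U: "open U"
  shows "is_casimir U \<alpha> \<beta> casimir_rho"
  unfolding is_casimir_def
proof (intro allI impI, elim conjE)
  fix \<rho> u w C\<rho> Cu Cw F F\<rho> Fu Fw
  assume adm: "admissible_state U \<rho> u w" and hC: "has_fderivs casimir_rho \<rho> u w C\<rho> Cu Cw"
    and hF: "has_fderivs F \<rho> u w F\<rho> Fu Fw" and dFu: "decays Fu"
  let ?L = "\<lambda>(r::real) (s::real) (v::real^'a). r"
  have dL: "\<And>r s v a b c. v \<in> U \<Longrightarrow>
        ((\<lambda>e. ?L (r + e*a) (s + e*b) (v + e *\<^sub>R c)) has_real_derivative
           ((\<lambda>r s v. 1) r s v * a + (\<lambda>r s v. 0) r s v * b + (\<lambda>r s v. 0::real^'a) r s v \<bullet> c)) (at 0)"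
    by (auto intro!: derivative_eq_intros)
  have c1: "continuous_on (UNIV \<times> UNIV \<times> U) (\<lambda>(r,s,v). ?L r s v)"
    by (simp add: case_prod_beta continuous_on_fst continuous_on_id)
  have c2: "continuous_on (UNIV \<times> UNIV \<times> U) (\<lambda>(r,s,v). (\<lambda>r s v. c) r s v)" for c :: "'b::topological_space"
    by (simp add: case_prod_beta)
  have Ceq: "\<And>\<rho>' u' w'. casimir_rho \<rho>' u' w' = integral UNIV (\<lambda>x. ?L (\<rho>' x) (u' x) (w' x))"
    by (simp add: casimir_rho_def)
  note id = identify[where L="?L" and Lr="\<lambda>r s v. 1" and Ls="\<lambda>r s v. 0" and Lv="\<lambda>r s v. 0",
      OF U dL c1 c2 c2 c2 adm hC Ceq]
  show "pd_bracket \<alpha> \<beta> \<rho> w C\<rho> Cu Cw F\<rho> Fu Fw = 0"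
  proof (cases "(\<lambda>x. ?L (\<rho> x) (u x) (w x)) integrable_on UNIV")
    case False
    then have "C\<rho> = (\<lambda>x. 0)" "Cu = (\<lambda>x. 0)" "Cw = (\<lambda>x. 0)" using id(2) by auto
    then show ?thesis by (simp add: bracket_zero)
  next
    case True
    then have e: "C\<rho> = (\<lambda>x. 1)" "Cu = (\<lambda>x. 0)" "Cw = (\<lambda>x. 0)" using id(1) by auto
    have "pd_bracket \<alpha> \<beta> \<rho> w C\<rho> Cu Cw F\<rho> Fu Fw = integral UNIV (\<lambda>x. - deriv Fu x)"
      unfolding e pd_bracket_def by (simp add: deriv_const0)
    also have "\<dots> = 0"
    proof (rule integral_deriv_decay[where h="\<lambda>x. - Fu x"])
      have "C1_fun Fu" using hF unfolding has_fderivs_def by blast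
      then show "((\<lambda>x. - Fu x) has_real_derivative - deriv Fu x) (at x)" for x
        by (intro derivative_intros C1_DERIV)
      show "((\<lambda>x. - Fu x) \<longlongrightarrow> 0) at_infinity"
        using dFu unfolding decays_def by (auto intro: tendsto_minus_cancel_left[THEN iffD1] simp: tendsto_minus_cancel_left)
    qed
    finally show ?thesis .
  qed
qed


lemma pd_bracket_alt:
  "pd_bracket \<alpha> \<beta> \<rho> w C\<rho> Cu Cw F\<rho> Fu Fw = integral UNIV (\<lambda>x.
      deriv Cu x * F\<rho> x - C\<rho> x * deriv Fu x
      + (Cu x * (dx_vec w x \<bullet> (\<chi> m. Fw x $ m / \<rho> x)) - Fu x * (dx_vec w x \<bullet> (\<chi> l. Cw x $ l / \<rho> x)))
      + (\<chi> l. deriv (\<lambda>y. Cw y $ l / \<rho> y) x) \<bullet> (\<alpha> (w x) *v (\<chi> m. Fw x $ m / \<rho> x))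
      + (\<chi> l. Cw x $ l / \<rho> x) \<bullet> (\<beta> (w x) (dx_vec w x) *v (\<chi> m. Fw x $ m / \<rho> x)))"
proof -
  have eq: "deriv Cu x * F\<rho> x - C\<rho> x * deriv Fu x
       + (\<Sum>k\<in>UNIV. deriv (\<lambda>y. w y $ k) x * (Cu x * (Fw x $ k / \<rho> x) - (Cw x $ k / \<rho> x) * Fu x))
       + (\<Sum>k\<in>UNIV. \<Sum>l\<in>UNIV. deriv (\<lambda>y. Cw y $ k / \<rho> y) x * (\<alpha> (w x) $ k $ l) * (Fw x $ l / \<rho> x))
       + (\<Sum>k\<in>UNIV. \<Sum>l\<in>UNIV. (Cw x $ k / \<rho> x) * (\<beta> (w x) (dx_vec w x) $ k $ l) * (Fw x $ l / \<rho> x))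
     = deriv Cu x * F\<rho> x - C\<rho> x * deriv Fu x
      + (Cu x * (dx_vec w x \<bullet> (\<chi> m. Fw x $ m / \<rho> x)) - Fu x * (dx_vec w x \<bullet> (\<chi> l. Cw x $ l / \<rho> x)))
      + (\<chi> l. deriv (\<lambda>y. Cw y $ l / \<rho> y) x) \<bullet> (\<alpha> (w x) *v (\<chi> m. Fw x $ m / \<rho> x))
      + (\<chi> l. Cw x $ l / \<rho> x) \<bullet> (\<beta> (w x) (dx_vec w x) *v (\<chi> m. Fw x $ m / \<rho> x))" for x
  proof -
    have a: "(\<Sum>k\<in>UNIV. deriv (\<lambda>y. w y $ k) x * (Cu x * (Fw x $ k / \<rho> x) - (Cw x $ k / \<rho> x) * Fu x))
       = Cu x * (dx_vec w x \<bullet> (\<chi> m. Fw x $ m / \<rho> x)) - Fu x * (dx_vec w x \<bullet> (\<chi> l. Cw x $ l / \<rho> x))"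
      by (simp add: inner_vec_def dx_vec_def sum_distrib_left algebra_simps sum_subtractf)
    have b: "(\<Sum>k\<in>UNIV. \<Sum>l\<in>UNIV. deriv (\<lambda>y. Cw y $ k / \<rho> y) x * (\<alpha> (w x) $ k $ l) * (Fw x $ l / \<rho> x))
        = (\<chi> l. deriv (\<lambda>y. Cw y $ l / \<rho> y) x) \<bullet> (\<alpha> (w x) *v (\<chi> m. Fw x $ m / \<rho> x))"
      using dsum_inner[of "\<chi> l. deriv (\<lambda>y. Cw y $ l / \<rho> y) x" "\<alpha> (w x)" "\<chi> m. Fw x $ m / \<rho> x"] by simp
    have c: "(\<Sum>k\<in>UNIV. \<Sum>l\<in>UNIV. (Cw x $ k / \<rho> x) * (\<beta> (w x) (dx_vec w x) $ k $ l) * (Fw x $ l / \<rho> x))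
        = (\<chi> l. Cw x $ l / \<rho> x) \<bullet> (\<beta> (w x) (dx_vec w x) *v (\<chi> m. Fw x $ m / \<rho> x))"
      using dsum_inner[of "\<chi> l. Cw x $ l / \<rho> x" "\<beta> (w x) (dx_vec w x)" "\<chi> m. Fw x $ m / \<rho> x"] by simp
    show ?thesis by (simp only: a b c)
  qed
  show ?thesis unfolding pd_bracket_def by (rule arg_cong[where f="integral UNIV"], rule ext, rule eq)
qed

lemma cont_snd2: "continuous_on U f \<Longrightarrow> continuous_on (A \<times> B \<times> U) (\<lambda>p. f (snd (snd p)))"
  by (rule continuous_on_compose2[OF _ continuous_on_snd[OF continuous_on_snd[OF continuous_on_id]]]) auto

lemma nu_dir:
  assumes "v \<in> U" "local_coordinates U \<nu> J DJ"
  shows "((\<lambda>e. \<nu> (v + e *\<^sub>R c)) has_vector_derivative J v *v c) (at 0)"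
proof -
  have d1: "((\<lambda>e::real. v + e *\<^sub>R c) has_derivative (\<lambda>t. t *\<^sub>R c)) (at 0)"
    by (auto intro!: derivative_eq_intros)
  have d2: "(\<nu> has_derivative (\<lambda>z. J v *v z)) (at ((\<lambda>e::real. v + e *\<^sub>R c) 0))"
    using assms unfolding local_coordinates_def by auto
  from diff_chain_at[OF d1 d2] show ?thesis
    unfolding has_vector_derivative_def by (simp add: o_def matrix_vector_mult_scaleR)
qed


lemma row_inner: "(\<chi> l. M $ k $ l) \<bullet> y = ((M::real^'n^'m) *v y) $ k"
  by (simp add: inner_vec_def matrix_vector_mult_def)

lemma row_inner': "(M $ k) \<bullet> y = ((M::real^'n^'m) *v y) $ k"
  by (simp add: inner_vec_def matrix_vector_mult_def)

lemma casimir_nu_thm: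
  assumes U: "open U" and z: "0 \<in> U" and lc: "local_coordinates U \<nu> J DJ"
    and fm: "flat_microscopic U \<alpha> \<beta> J DJ g"
  shows "is_casimir U \<alpha> \<beta> (casimir_nu \<nu> k)"
  unfolding is_casimir_def
proof (intro allI impI, elim conjE)
  fix \<rho> u w C\<rho> Cu Cw F F\<rho> Fu Fw
  assume adm: "admissible_state U \<rho> u w" and hC: "has_fderivs (casimir_nu \<nu> k) \<rho> u w C\<rho> Cu Cw"
    and hF: "has_fderivs F \<rho> u w F\<rho> Fu Fw" and dFu: "decays Fu"
  define L where "L = (\<lambda>(r::real) (s::real) v. r * \<nu> v $ k)"
  define Lr where "Lr = (\<lambda>(r::real) (s::real) v. \<nu> v $ k)"
  define Ls where "Ls = (\<lambda>(r::real) (s::real) (v::real^'a). 0::real)"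
  define Lv where "Lv = (\<lambda>(r::real) (s::real) v. r *\<^sub>R (\<chi> j. J v $ k $ j))"
  have dL: "((\<lambda>e. L (r + e*a) (s + e*b) (v + e *\<^sub>R c)) has_real_derivative
           (Lr r s v * a + Ls r s v * b + Lv r s v \<bullet> c)) (at 0)" if v: "v \<in> U" for r s v a b c
  proof -
    have A: "((\<lambda>e. r + e*a) has_real_derivative a) (at 0)" by (auto intro!: derivative_eq_intros)
    have B: "((\<lambda>e. \<nu> (v + e *\<^sub>R c) $ k) has_real_derivative (J v *v c) $ k) (at 0)"
      using bl_real_deriv[OF bl_nth nu_dir[OF v lc]] by simp
    have "((\<lambda>e. (r + e*a) * \<nu> (v + e *\<^sub>R c) $ k) has_real_derivative
         a * \<nu> (v + 0 *\<^sub>R c) $ k + (J v *v c) $ k * (r + 0 * a)) (at 0)"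
      by (rule DERIV_mult[OF A B])
    moreover have "a * \<nu> (v + 0 *\<^sub>R c) $ k + (J v *v c) $ k * (r + 0 * a) = Lr r s v * a + Ls r s v * b + Lv r s v \<bullet> c"
      unfolding Lr_def Ls_def Lv_def
      by (simp add: matrix_vector_mult_def inner_vec_def sum_distrib_left algebra_simps)
    ultimately show ?thesis unfolding L_def by simp
  qed
  have cnu: "continuous_on U \<nu>" "continuous_on U J" using nu_cont[OF lc] by auto
  have cf: "continuous_on (UNIV \<times> UNIV \<times> U) (\<lambda>p::real \<times> real \<times> (real^'a). fst p)"
    by (rule continuous_on_fst[OF continuous_on_id])
  have c1: "continuous_on (UNIV \<times> UNIV \<times> U) (\<lambda>(r,s,v). L r s v)"
    unfolding L_def case_prod_beta
    by (rule continuous_on_mult[OF cf continuous_on_component[OF cont_snd2[OF cnu(1)]]])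
  have c2: "continuous_on (UNIV \<times> UNIV \<times> U) (\<lambda>(r,s,v). Lr r s v)"
    unfolding Lr_def case_prod_beta by (rule continuous_on_component[OF cont_snd2[OF cnu(1)]])
  have c3: "continuous_on (UNIV \<times> UNIV \<times> U) (\<lambda>(r,s,v). Ls r s v)"
    unfolding Ls_def by simp
  have c4: "continuous_on (UNIV \<times> UNIV \<times> U) (\<lambda>(r,s,v). Lv r s v)"
    unfolding Lv_def case_prod_beta
    by (intro continuous_on_scaleR[OF cf] continuous_on_vec_lambda continuous_on_component
        cont_snd2[OF cnu(2)])
  have Ceq: "\<And>\<rho>' u' w'. casimir_nu \<nu> k \<rho>' u' w' = integral UNIV (\<lambda>x. L (\<rho>' x) (u' x) (w' x))"
    by (simp add: casimir_nu_def L_def)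
  note id = identify[OF U dL c1 c2 c3 c4 adm hC Ceq]
  show "pd_bracket \<alpha> \<beta> \<rho> w C\<rho> Cu Cw F\<rho> Fu Fw = 0"
  proof (cases "(\<lambda>x. L (\<rho> x) (u x) (w x)) integrable_on UNIV")
    case False
    then have "C\<rho> = (\<lambda>x. 0)" "Cu = (\<lambda>x. 0)" "Cw = (\<lambda>x. 0)" using id(2) by auto
    then show ?thesis by (simp add: bracket_zero)
  next
    case True
    then have eC: "C\<rho> = (\<lambda>x. \<nu> (w x) $ k)" "Cu = (\<lambda>x. 0)" "Cw = (\<lambda>x. \<rho> x *\<^sub>R (\<chi> j. J (w x) $ k $ j))"
      using id(1) unfolding Lr_def Ls_def Lv_def by auto
    have \<rho>nz: "\<rho> y \<noteq> 0" for y using adm unfolding admissible_state_def by auto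
    have wU: "w y \<in> U" for y using adm unfolding admissible_state_def by auto
    have Xe: "(\<lambda>y. Cw y $ l / \<rho> y) = (\<lambda>y. J (w y) $ k $ l)" for l
      using \<rho>nz unfolding eC by (auto intro!: ext)
    have Xde: "deriv (\<lambda>y. Cw y $ l / \<rho> y) x = DJ (w x) (dx_vec w x) $ k $ l" for x l
      unfolding Xe by (rule DERIV_imp_deriv[OF bl_real_deriv[OF bl_nth2 J_vd[OF adm lc]]])
    have fC1: "C1_fun Fu" using hF unfolding has_fderivs_def by blast
    define h' where "h' = (\<lambda>x. - (((J (w x) *v dx_vec w x) $ k) * Fu x + \<nu> (w x) $ k * deriv Fu x))"
    have integrand: "deriv Cu x * F\<rho> x - C\<rho> x * deriv Fu x
      + (Cu x * (dx_vec w x \<bullet> (\<chi> m. Fw x $ m / \<rho> x)) - Fu x * (dx_vec w x \<bullet> (\<chi> l. Cw x $ l / \<rho> x)))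
      + (\<chi> l. deriv (\<lambda>y. Cw y $ l / \<rho> y) x) \<bullet> (\<alpha> (w x) *v (\<chi> m. Fw x $ m / \<rho> x))
      + (\<chi> l. Cw x $ l / \<rho> x) \<bullet> (\<beta> (w x) (dx_vec w x) *v (\<chi> m. Fw x $ m / \<rho> x)) = h' x" for x
    proof -
      define b where "b = (\<chi> m. Fw x $ m / \<rho> x)"
      define w' where "w' = dx_vec w x"
      have X: "(\<chi> l. Cw x $ l / \<rho> x) = (\<chi> l. J (w x) $ k $ l)" using \<rho>nz unfolding eC by (simp add: vec_eq_iff)
      have X': "(\<chi> l. deriv (\<lambda>y. Cw y $ l / \<rho> y) x) = (\<chi> l. DJ (w x) w' $ k $ l)"
        unfolding w'_def by (simp add: Xde)
      have i1: "w' \<bullet> (\<chi> l. J (w x) $ k $ l) = (J (w x) *v w') $ k"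
        using row_inner[of "J (w x)" k w'] by (simp add: inner_commute)
      have inv: "invertible (J (w x))" using lc wU[of x] unfolding local_coordinates_def by blast
      have eq0: "DJ (w x) w' ** \<alpha> (w x) ** transpose (J (w x)) + J (w x) ** \<beta> (w x) w' ** transpose (J (w x)) = 0"
        using fm wU[of x] unfolding flat_microscopic_def by blast
      have P0: "DJ (w x) w' ** \<alpha> (w x) + J (w x) ** \<beta> (w x) w' = 0"
        by (rule flat_zero[OF inv eq0])
      have i2: "(\<chi> l. DJ (w x) w' $ k $ l) \<bullet> (\<alpha> (w x) *v b) + (\<chi> l. J (w x) $ k $ l) \<bullet> (\<beta> (w x) w' *v b) = 0"
      proof -
        have "(\<chi> l. DJ (w x) w' $ k $ l) \<bullet> (\<alpha> (w x) *v b) + (\<chi> l. J (w x) $ k $ l) \<bullet> (\<beta> (w x) w' *v b)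
            = ((DJ (w x) w' ** \<alpha> (w x) + J (w x) ** \<beta> (w x) w') *v b) $ k"
          by (simp add: row_inner' matrix_vector_mul_assoc[symmetric] matrix_vector_mult_add_rdistrib)
        also have "\<dots> = 0" using P0 by simp
        finally show ?thesis .
      qed
      show ?thesis unfolding X X' b_def[symmetric] w'_def[symmetric]
        using i1 i2 unfolding eC h'_def w'_def by (simp add: deriv_const0 algebra_simps)
    qed
    have "pd_bracket \<alpha> \<beta> \<rho> w C\<rho> Cu Cw F\<rho> Fu Fw = integral UNIV h'"
      unfolding pd_bracket_alt using integrand by presburger
    also have "\<dots> = 0"
    proof (rule integral_deriv_decay[where h="\<lambda>y. - (\<nu> (w y) $ k * Fu y)"])
      show "((\<lambda>y. - (\<nu> (w y) $ k * Fu y)) has_real_derivative h' x) (at x)" for x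
      proof -
        have "((\<lambda>z. \<nu> (w z) $ k * Fu z) has_real_derivative
            (J (w x) *v dx_vec w x) $ k * Fu x + deriv Fu x * \<nu> (w x) $ k) (at x)"
          by (rule DERIV_mult[OF bl_real_deriv[OF bl_nth nu_vd[OF adm lc]] C1_DERIV[OF fC1]])
        from DERIV_minus[OF this] show ?thesis unfolding h'_def by (simp add: algebra_simps)
      qed
      have "((\<lambda>y. \<nu> (w y) $ k * Fu y) \<longlongrightarrow> \<nu> 0 $ k * 0) at_infinity"
        using dFu unfolding decays_def
        by (intro tendsto_mult tendsto_vec_nth nu_lim[OF adm lc z])
      then show "((\<lambda>y. - (\<nu> (w y) $ k * Fu y)) \<longlongrightarrow> 0) at_infinity"
        using tendsto_minus by fastforce
    qed
    finally show ?thesis .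
  qed
qed


lemma vd_inner:
  fixes f g :: "real \<Rightarrow> real^'n"
  assumes "(f has_vector_derivative f') (at x)" "(g has_vector_derivative g') (at x)"
  shows "((\<lambda>y. f y \<bullet> g y) has_real_derivative (f x \<bullet> g' + f' \<bullet> g x)) (at x)"
proof -
  have "((\<lambda>y. f y \<bullet> g y) has_derivative (\<lambda>h. f x \<bullet> (h *\<^sub>R g') + (h *\<^sub>R f') \<bullet> g x)) (at x)"
    using has_derivative_inner[OF assms[unfolded has_vector_derivative_def]] .
  moreover have "(\<lambda>h. f x \<bullet> (h *\<^sub>R g') + (h *\<^sub>R f') \<bullet> g x) = (*) (f x \<bullet> g' + f' \<bullet> g x)"
    by (auto simp: fun_eq_iff algebra_simps)
  ultimately show ?thesis unfolding has_field_derivative_def by simp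
qed

lemma bl_Gi: "bounded_linear (\<lambda>v::real^'n. ((G::real^'n^'m) *v v) $ i)"
  by (rule bounded_linear_compose[of "\<lambda>v. v $ i" "\<lambda>v. G *v v"]) (rule bounded_linear_vec_nth, rule bl_mv)

lemma cont_vm:
  fixes y :: "'a::topological_space \<Rightarrow> real^'m" and M :: "'a \<Rightarrow> real^'n^'m"
  assumes "continuous_on S y" "continuous_on S M"
  shows "continuous_on S (\<lambda>v. y v v* M v)"
  unfolding vector_matrix_mult_def
  by (intro continuous_on_vec_lambda continuous_on_sum continuous_on_mult continuous_on_component assms)

lemma cont_mv:
  fixes y :: "'a::topological_space \<Rightarrow> real^'n"
  assumes "continuous_on S y"
  shows "continuous_on S (\<lambda>v. (G::real^'n^'m) *v y v)"
  using bounded_linear.continuous_on[OF bl_mv assms] .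

lemma sym_inner:
  fixes G :: "real^'n^'n"
  assumes "transpose G = G"
  shows "x \<bullet> (G *v y) = (G *v x) \<bullet> y"
proof -
  have "x \<bullet> (G *v y) = (x v* G) \<bullet> y" by (simp add: inner_vm)
  also have "x v* G = G *v x" using vector_transpose_matrix[of x G] assms by simp
  finally show ?thesis .
qed

lemma casimir_u_thm:
  assumes U: "open U" and z: "0 \<in> U" and pc: "pd_coefficients U \<alpha> \<beta>" and lc: "local_coordinates U \<nu> J DJ"
    and gs: "transpose g = g" and gi: "invertible g"
    and fm: "flat_microscopic U \<alpha> \<beta> J DJ g"
  shows "is_casimir U \<alpha> \<beta> (casimir_u \<nu> g)"
  unfolding is_casimir_def
proof (intro allI impI, elim conjE)
  fix \<rho> u w C\<rho> Cu Cw F F\<rho> Fu Fw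
  assume adm: "admissible_state U \<rho> u w" and hC: "has_fderivs (casimir_u \<nu> g) \<rho> u w C\<rho> Cu Cw"
    and hF: "has_fderivs F \<rho> u w F\<rho> Fu Fw" and dFu: "decays Fu"
  define G where "G = matrix_inv g"
  have Gs: "transpose G = G" unfolding G_def by (rule minv_sym[OF gi gs])
  define Q where "Q = (\<lambda>v::real^'a. \<nu> v \<bullet> (G *v \<nu> v))"
  define L where "L = (\<lambda>(r::real) (s::real) v. s - r / 2 * Q v)"
  define Lr where "Lr = (\<lambda>(r::real) (s::real) v. - Q v / 2)"
  define Ls where "Ls = (\<lambda>(r::real) (s::real) (v::real^'a). 1::real)"
  define Lv where "Lv = (\<lambda>(r::real) (s::real) v. - (r *\<^sub>R ((G *v \<nu> v) v* J v)))"
  have dL: "((\<lambda>e. L (r + e*a) (s + e*b) (v + e *\<^sub>R c)) has_real_derivative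
           (Lr r s v * a + Ls r s v * b + Lv r s v \<bullet> c)) (at 0)" if v: "v \<in> U" for r s v a b c
  proof -
    have n1: "((\<lambda>e. \<nu> (v + e *\<^sub>R c)) has_vector_derivative J v *v c) (at 0)" by (rule nu_dir[OF v lc])
    have n2: "((\<lambda>e. G *v \<nu> (v + e *\<^sub>R c)) has_vector_derivative G *v (J v *v c)) (at 0)"
      by (rule bounded_linear.has_vector_derivative[OF bl_mv n1])
    have Qd: "((\<lambda>e. Q (v + e *\<^sub>R c)) has_real_derivative
        \<nu> (v + 0 *\<^sub>R c) \<bullet> (G *v (J v *v c)) + (J v *v c) \<bullet> (G *v \<nu> (v + 0 *\<^sub>R c))) (at 0)"
      unfolding Q_def by (rule vd_inner[OF n1 n2])
    have Qd': "\<nu> (v + 0 *\<^sub>R c) \<bullet> (G *v (J v *v c)) + (J v *v c) \<bullet> (G *v \<nu> (v + 0 *\<^sub>R c))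
        = 2 * ((G *v \<nu> v) \<bullet> (J v *v c))"
      using sym_inner[OF Gs, of "\<nu> v" "J v *v c"] by (simp add: inner_commute)
    have A: "((\<lambda>e. (r + e*a) / 2) has_real_derivative a / 2) (at 0)" by (auto intro!: derivative_eq_intros)
    have B: "((\<lambda>e. s + e*b) has_real_derivative b) (at 0)" by (auto intro!: derivative_eq_intros)
    have "((\<lambda>e. (s + e*b) - (r + e*a) / 2 * Q (v + e *\<^sub>R c)) has_real_derivative
        b - (a / 2 * Q (v + 0 *\<^sub>R c) + (\<nu> (v + 0 *\<^sub>R c) \<bullet> (G *v (J v *v c)) + (J v *v c) \<bullet> (G *v \<nu> (v + 0 *\<^sub>R c))) * ((r + 0 * a) / 2))) (at 0)"
      by (rule DERIV_diff[OF B DERIV_mult[OF A Qd]])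
    moreover have "b - (a / 2 * Q (v + 0 *\<^sub>R c) + (\<nu> (v + 0 *\<^sub>R c) \<bullet> (G *v (J v *v c)) + (J v *v c) \<bullet> (G *v \<nu> (v + 0 *\<^sub>R c))) * ((r + 0 * a) / 2))
        = Lr r s v * a + Ls r s v * b + Lv r s v \<bullet> c"
      unfolding Qd' Lr_def Ls_def Lv_def by (simp add: inner_vm algebra_simps)
    ultimately show ?thesis unfolding L_def by simp
  qed
  have cnu: "continuous_on U \<nu>" "continuous_on U J" using nu_cont[OF lc] by auto
  have cQ: "continuous_on U Q" unfolding Q_def by (intro continuous_on_inner cont_mv cnu)
  have cf: "continuous_on (UNIV \<times> UNIV \<times> U) (\<lambda>p::real \<times> real \<times> (real^'a). fst p)"
    by (rule continuous_on_fst[OF continuous_on_id])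
  have cf2: "continuous_on (UNIV \<times> UNIV \<times> U) (\<lambda>p::real \<times> real \<times> (real^'a). fst (snd p))"
    by (rule continuous_on_fst[OF continuous_on_snd[OF continuous_on_id]])
  have c1: "continuous_on (UNIV \<times> UNIV \<times> U) (\<lambda>(r,s,v). L r s v)"
    unfolding L_def case_prod_beta
    by (intro continuous_on_diff cf2 continuous_on_mult continuous_on_divide cf continuous_on_const
        cont_snd2[OF cQ]) auto
  have c2: "continuous_on (UNIV \<times> UNIV \<times> U) (\<lambda>(r,s,v). Lr r s v)"
    unfolding Lr_def case_prod_beta
    by (intro continuous_on_minus continuous_on_divide continuous_on_const cont_snd2[OF cQ]) auto
  have c3: "continuous_on (UNIV \<times> UNIV \<times> U) (\<lambda>(r,s,v). Ls r s v)"
    unfolding Ls_def by simp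
  have c4: "continuous_on (UNIV \<times> UNIV \<times> U) (\<lambda>(r,s,v). Lv r s v)"
    unfolding Lv_def case_prod_beta
    by (intro continuous_on_minus continuous_on_scaleR[OF cf] cont_snd2 cont_vm cont_mv cnu)
  have Ceq: "\<And>\<rho>' u' w'. casimir_u \<nu> g \<rho>' u' w' = integral UNIV (\<lambda>x. L (\<rho>' x) (u' x) (w' x))"
    by (simp add: casimir_u_def L_def Q_def G_def)
  note id = identify[OF U dL c1 c2 c3 c4 adm hC Ceq]
  show "pd_bracket \<alpha> \<beta> \<rho> w C\<rho> Cu Cw F\<rho> Fu Fw = 0"
  proof (cases "(\<lambda>x. L (\<rho> x) (u x) (w x)) integrable_on UNIV")
    case False
    then have "C\<rho> = (\<lambda>x. 0)" "Cu = (\<lambda>x. 0)" "Cw = (\<lambda>x. 0)" using id(2) by auto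
    then show ?thesis by (simp add: bracket_zero)
  next
    case True
    define a where "a = (\<lambda>y. G *v \<nu> (w y))"
    have eC: "C\<rho> = (\<lambda>x. - Q (w x) / 2)" "Cu = (\<lambda>x. 1)" "Cw = (\<lambda>x. - (\<rho> x *\<^sub>R (a x v* J (w x))))"
      using id(1) True unfolding Lr_def Ls_def Lv_def a_def by auto
    have \<rho>nz: "\<rho> y \<noteq> 0" for y using adm unfolding admissible_state_def by auto
    have wU: "w y \<in> U" for y using adm unfolding admissible_state_def by auto
    have Xe: "(\<lambda>y. Cw y $ l / \<rho> y) = (\<lambda>y. - (\<Sum>i\<in>UNIV. a y $ i * J (w y) $ i $ l))" for l
      using \<rho>nz unfolding eC by (auto intro!: ext simp: vector_matrix_mult_def)
    have ad: "((\<lambda>y. a y $ i) has_real_derivative (G *v (J (w x) *v dx_vec w x)) $ i) (at x)" for i x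
      unfolding a_def by (rule bl_real_deriv[OF bl_Gi nu_vd[OF adm lc]])
    have Jd: "((\<lambda>y. J (w y) $ i $ l) has_real_derivative DJ (w x) (dx_vec w x) $ i $ l) (at x)" for i l x
      by (rule bl_real_deriv[OF bl_nth2 J_vd[OF adm lc]])
    define a' where "a' = (\<lambda>x. G *v (J (w x) *v dx_vec w x))"
    define Dm where "Dm = (\<lambda>x. DJ (w x) (dx_vec w x))"
    have Xde: "deriv (\<lambda>y. Cw y $ l / \<rho> y) x = - ((a' x v* J (w x)) $ l + (a x v* Dm x) $ l)" for x l
    proof -
      have "((\<lambda>y. - (\<Sum>i\<in>UNIV. a y $ i * J (w y) $ i $ l)) has_real_derivative
          - (\<Sum>i\<in>UNIV. a' x $ i * J (w x) $ i $ l + Dm x $ i $ l * a x $ i)) (at x)"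
        unfolding a'_def Dm_def
        by (intro DERIV_minus DERIV_sum DERIV_mult ad Jd)
      then show ?thesis unfolding Xe
        by (intro DERIV_imp_deriv) (simp add: vector_matrix_mult_def sum.distrib algebra_simps)
    qed
    have fC1: "C1_fun Fu" using hF unfolding has_fderivs_def by blast
    define h' where "h' = (\<lambda>x. (a x \<bullet> (J (w x) *v dx_vec w x)) * Fu x + Q (w x) / 2 * deriv Fu x)"
    have integrand: "deriv Cu x * F\<rho> x - C\<rho> x * deriv Fu x
      + (Cu x * (dx_vec w x \<bullet> (\<chi> m. Fw x $ m / \<rho> x)) - Fu x * (dx_vec w x \<bullet> (\<chi> l. Cw x $ l / \<rho> x)))
      + (\<chi> l. deriv (\<lambda>y. Cw y $ l / \<rho> y) x) \<bullet> (\<alpha> (w x) *v (\<chi> m. Fw x $ m / \<rho> x))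
      + (\<chi> l. Cw x $ l / \<rho> x) \<bullet> (\<beta> (w x) (dx_vec w x) *v (\<chi> m. Fw x $ m / \<rho> x)) = h' x" for x
    proof -
      define b where "b = (\<chi> m. Fw x $ m / \<rho> x)"
      define w' where "w' = dx_vec w x"
      have X: "(\<chi> l. Cw x $ l / \<rho> x) = - (a x v* J (w x))"
        using \<rho>nz unfolding eC by (simp add: vec_eq_iff)
      have X': "(\<chi> l. deriv (\<lambda>y. Cw y $ l / \<rho> y) x) = - (a' x v* J (w x) + a x v* Dm x)"
        by (simp add: Xde vec_eq_iff)
      have i1: "w' \<bullet> (a x v* J (w x)) = a x \<bullet> (J (w x) *v w')"
        by (simp add: inner_commute[of w'] inner_vm)
      have inv: "invertible (J (w x))" using lc wU[of x] unfolding local_coordinates_def by blast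
      have eq0: "Dm x ** \<alpha> (w x) ** transpose (J (w x)) + J (w x) ** \<beta> (w x) w' ** transpose (J (w x)) = 0"
        using fm wU[of x] unfolding flat_microscopic_def Dm_def w'_def by blast
      have P0: "Dm x ** \<alpha> (w x) + J (w x) ** \<beta> (w x) w' = 0"
        by (rule flat_zero[OF inv eq0])
      have Jg: "J (w x) ** \<alpha> (w x) ** transpose (J (w x)) = g"
        using fm wU[of x] unfolding flat_microscopic_def by blast
      have \<alpha>s: "transpose (\<alpha> (w x)) = \<alpha> (w x)" using pc wU[of x] unfolding pd_coefficients_def by blast
      have Id: "transpose (J (w x) ** \<alpha> (w x)) ** G ** J (w x) = mat 1"
        unfolding G_def by (rule flat_id[OF inv gi Jg \<alpha>s])
      have a'e: "a' x v* (J (w x) ** \<alpha> (w x)) = w'"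
      proof -
        have "a' x v* (J (w x) ** \<alpha> (w x)) = transpose (J (w x) ** \<alpha> (w x)) *v (G *v (J (w x) *v w'))"
          unfolding a'_def w'_def by (simp add: transpose_matrix_vector)
        also have "\<dots> = (transpose (J (w x) ** \<alpha> (w x)) ** G ** J (w x)) *v w'"
          by (simp add: matrix_vector_mul_assoc matrix_mul_assoc)
        also have "\<dots> = w'" using Id by simp
        finally show ?thesis .
      qed
      have i2: "(a' x v* J (w x) + a x v* Dm x) \<bullet> (\<alpha> (w x) *v b) + (a x v* J (w x)) \<bullet> (\<beta> (w x) w' *v b) = w' \<bullet> b"
      proof -
        have "(a' x v* J (w x) + a x v* Dm x) \<bullet> (\<alpha> (w x) *v b) + (a x v* J (w x)) \<bullet> (\<beta> (w x) w' *v b)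
          = (a' x v* (J (w x) ** \<alpha> (w x))) \<bullet> b + a x \<bullet> ((Dm x ** \<alpha> (w x) + J (w x) ** \<beta> (w x) w') *v b)"
          by (simp add: inner_add_left inner_add_right inner_vm matrix_vector_mul_assoc[symmetric]
              matrix_vector_mult_add_rdistrib)
        also have "\<dots> = w' \<bullet> b" using P0 a'e by simp
        finally show ?thesis .
      qed
      show ?thesis unfolding X X' b_def[symmetric] w'_def[symmetric]
        using i1 i2 unfolding eC h'_def w'_def by (simp add: deriv_const0 algebra_simps inner_minus_left)
    qed
    have "pd_bracket \<alpha> \<beta> \<rho> w C\<rho> Cu Cw F\<rho> Fu Fw = integral UNIV h'"
      unfolding pd_bracket_alt using integrand by presburger
    also have "\<dots> = 0"
    proof (rule integral_deriv_decay[where h="\<lambda>y. Q (w y) / 2 * Fu y"])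
      show "((\<lambda>y. Q (w y) / 2 * Fu y) has_real_derivative h' x) (at x)" for x
      proof -
        have n1: "((\<lambda>y. \<nu> (w y)) has_vector_derivative J (w x) *v dx_vec w x) (at x)" by (rule nu_vd[OF adm lc])
        have n2: "((\<lambda>y. G *v \<nu> (w y)) has_vector_derivative G *v (J (w x) *v dx_vec w x)) (at x)"
          by (rule bounded_linear.has_vector_derivative[OF bl_mv n1])
        have Qd: "((\<lambda>y. Q (w y)) has_real_derivative
            \<nu> (w x) \<bullet> (G *v (J (w x) *v dx_vec w x)) + (J (w x) *v dx_vec w x) \<bullet> (G *v \<nu> (w x))) (at x)"
          unfolding Q_def by (rule vd_inner[OF n1 n2])
        have Qd': "\<nu> (w x) \<bullet> (G *v (J (w x) *v dx_vec w x)) + (J (w x) *v dx_vec w x) \<bullet> (G *v \<nu> (w x))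
            = 2 * (a x \<bullet> (J (w x) *v dx_vec w x))"
          using sym_inner[OF Gs, of "\<nu> (w x)" "J (w x) *v dx_vec w x"] unfolding a_def by (simp add: inner_commute)
        have "((\<lambda>y. Q (w y) / 2 * Fu y) has_real_derivative
          (\<nu> (w x) \<bullet> (G *v (J (w x) *v dx_vec w x)) + (J (w x) *v dx_vec w x) \<bullet> (G *v \<nu> (w x))) / 2 * Fu x
            + deriv Fu x * (Q (w x) / 2)) (at x)"
          by (rule DERIV_mult[OF DERIV_cdivide[OF Qd] C1_DERIV[OF fC1]])
        then show ?thesis unfolding Qd' h'_def by (simp add: algebra_simps)
      qed
      have "((\<lambda>y. Q (w y) / 2 * Fu y) \<longlongrightarrow> Q 0 / 2 * 0) at_infinity"
      proof (intro tendsto_mult tendsto_divide tendsto_const)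
        show "(Fu \<longlongrightarrow> 0) at_infinity" using dFu unfolding decays_def .
        have "(\<nu> has_derivative (\<lambda>v. J 0 *v v)) (at 0)" using lc z unfolding local_coordinates_def by auto
        then have "isCont \<nu> 0" by (rule has_derivative_continuous)
        then have "isCont Q 0" unfolding Q_def
          by (intro isCont_inner isCont_o2[where f=\<nu> and g="\<lambda>v. G *v v"]) (auto intro: linear_continuous_at bl_mv)
        then show "((\<lambda>y. Q (w y)) \<longlongrightarrow> Q 0) at_infinity"
          by (rule isCont_tendsto_compose[OF _ w_lim[OF adm]])
      qed simp
      then show "((\<lambda>y. Q (w y) / 2 * Fu y) \<longlongrightarrow> 0) at_infinity" by simp
    qed
    finally show ?thesis .
  qed
qed


theorem lemma2:
  fixes \<alpha> :: "real^'n \<Rightarrow> real^'n^'n"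
    and \<beta> :: "real^'n \<Rightarrow> real^'n \<Rightarrow> real^'n^'n"
    and U :: "(real^'n) set"
    and \<nu> :: "real^'n \<Rightarrow> real^'n"
    and J :: "real^'n \<Rightarrow> real^'n^'n"
    and DJ :: "real^'n \<Rightarrow> real^'n \<Rightarrow> real^'n^'n"
    and g :: "real^'n^'n"
  assumes "open U" and "0 \<in> U"
    and "pd_coefficients U \<alpha> \<beta>"
    and "nondegenerate U \<alpha>"
    and "local_coordinates U \<nu> J DJ"
    and "transpose g = g" and "invertible g"
    and "flat_microscopic U \<alpha> \<beta> J DJ g"
  shows "is_casimir U \<alpha> \<beta> casimir_rho
       \<and> (\<forall>k. is_casimir U \<alpha> \<beta> (casimir_nu \<nu> k))
       \<and> is_casimir U \<alpha> \<beta> (casimir_u \<nu> g)"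
proof -
  note a = assms
  show ?thesis
    using casimir_rho_thm[OF a(1)] casimir_nu_thm[OF a(1) a(2) a(5) a(8)]
      casimir_u_thm[OF a(1) a(2) a(3) a(5) a(6) a(7) a(8)]
    by blast
qed

end
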